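(* Let $\chi=1$ and let $D_0:=|\det g|\,dg\otimes1\otimes1\in\mathcal S^*(\mathcal O_2)\otimes(|\det|\boxtimes|\det|^{-1})$, where $dg$ is a Haar measure on $\mathcal O_2=\mathrm{GL}_2(F)$; it spans the one-dimensional space $\mathcal S^*(\mathcal O_2)^\chi$. Then there exists $D_1\in\mathcal S^*(M_2)\otimes(|\det|\boxtimes|\det|^{-1})$ such that the restriction of $D_1$ to $\mathcal O_2$ equals $D_0$, and $D_1\in\mathcal S^*(M_2)^{\chi,\infty}\setminus\mathcal S^*(M_2)^{\chi}$.
   Context: $F$ nonarchimedean local field of characteristic $0$, $G=G'=\mathrm{GL}_2(F)$ acting on $M_2:=M_{2\times2}(F)$, $\mathcal O_2$ the set of invertible matrices. For $X\in\{M_2,\mathcal O_2\}$, $\mathcal S(X)$ is the space of locally constant compactly supported functions with $((g_1,g_2)f)(M)=f(g_1^{-1}Mg_2)$, $\mathcal S^*(X)$ its algebraic dual with contragredient action, and the restriction map $\mathcal S^*(M_2)\to\mathcal S^*(\mathcal O_2)$ is dual to extension by zero. For a character $\chi$ of $G$, $\mathcal S^*(X)^\chi$ is the space of $G$-invariant vectors (first factor) in $\mathcal S^*(X)\otimes(|\det|\boxtimes|\det|^{-1})\otimes\chi^{-1}$, and $\mathcal S^*(X)^{\chi,\infty}$ is the space of generalized $(G,\chi)$-invariant vectors in $\mathcal S^*(X)\otimes(|\det|\boxtimes|\det|^{-1})$, where $v$ is generalized $\chi$-invariant if for some $k\ge0$, $(g_0-\chi(g_0))\cdots(g_k-\chi(g_k))v=0$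 for all $g_0,\dots,g_k\in G$. *)

theory Defs
  imports "HOL-Analysis.Analysis"
begin

definition nonarch_local_field :: "('a::field_char_0 \<Rightarrow> real) \<Rightarrow> bool" where
  "nonarch_local_field absv \<longleftrightarrow>
     (\<forall>x. absv x \<ge> 0) \<and> (\<forall>x. absv x = 0 \<longleftrightarrow> x = 0) \<and>
     (\<forall>x y. absv (x * y) = absv x * absv y) \<and>
     (\<forall>x y. absv (x + y) \<le> max (absv x) (absv y)) \<and>
     (\<exists>x. absv x \<noteq> 0 \<and> absv x \<noteq> 1) \<and>
     \<comment> \<open>complete\<close>
     (\<forall>s::nat \<Rightarrow> 'a::field_char_0. (\<forall>e>0. \<exists>N. \<forall>m\<ge>N. \<forall>n\<ge>N. absv (s m - s n) < e) \<longrightarrow>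
         (\<exists>l. \<forall>e>0. \<exists>N. \<forall>n\<ge>N. absv (s n - l) < e)) \<and>
     \<comment> \<open>closed unit ball totally bounded (so compact: local compactness)\<close>
     (\<forall>e>0. \<exists>S. finite S \<and> S \<subseteq> {x. absv x \<le> 1} \<and>
         (\<forall>x. absv x \<le> 1 \<longrightarrow> (\<exists>s\<in>S. absv (x - s) < e))) \<and>
     \<comment> \<open>normalized: |uniformizer| = 1/q, q = size of residue field\<close>
     (\<exists>p. 0 < absv p \<and> absv p < 1 \<and> (\<forall>x. absv x < 1 \<longrightarrow> absv x \<le> absv p) \<and>
         real (card ((\<lambda>x. {y. absv y \<le> 1 \<and> absv (y - x) < 1}) ` {x. absv x \<le> 1}))
           = 1 / absv p)"

type_synonym 'a mat2 = "'a^2^2"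

definition mdist :: "('a::field \<Rightarrow> real) \<Rightarrow> 'a mat2 \<Rightarrow> 'a mat2 \<Rightarrow> real" where
  "mdist absv M N = Max {absv (M$i$j - N$i$j) | i j. True}"

definition GL2 :: "'a::field mat2 set" where
  "GL2 = {M. det M \<noteq> 0}"

definition compact_M :: "('a::field \<Rightarrow> real) \<Rightarrow> 'a mat2 set \<Rightarrow> bool" where
  "compact_M absv K \<longleftrightarrow> (\<forall>s::nat \<Rightarrow> 'a::field mat2. (\<forall>n. s n \<in> K) \<longrightarrow>
      (\<exists>l\<in>K. \<exists>r::nat\<Rightarrow>nat. strict_mono r \<and> (\<forall>e>0. \<exists>N. \<forall>n\<ge>N. mdist absv (s (r n)) l < e)))"

text \<open>Schwartz space S(X) for X = M_2 (UNIV) or X = O_2 (GL2); functions on X are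
represented as functions on M_2 vanishing off X (extension by zero).\<close>
definition Sch :: "('a::field \<Rightarrow> real) \<Rightarrow> 'a mat2 set \<Rightarrow> ('a mat2 \<Rightarrow> complex) set" where
  "Sch absv X = {f. (\<forall>M. M \<notin> X \<longrightarrow> f M = 0) \<and>
      (\<forall>M\<in>X. \<exists>r>0. \<forall>N\<in>X. mdist absv N M < r \<longrightarrow> f N = f M) \<and>
      (\<exists>K. K \<subseteq> X \<and> compact_M absv K \<and> {M\<in>X. f M \<noteq> 0} \<subseteq> K)}"

text \<open>Elements of the algebraic dual S*(X) (only values on S(X) are relevant).\<close>
definition is_dist :: "('a::field \<Rightarrow> real) \<Rightarrow> 'a mat2 set \<Rightarrow> (('a mat2 \<Rightarrow> complex) \<Rightarrow> complex) \<Rightarrow> bool" where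
  "is_dist absv X D \<longleftrightarrow> (\<forall>f\<in>Sch absv X. \<forall>h\<in>Sch absv X. \<forall>c::complex.
       D (\<lambda>M. f M + h M) = D f + D h \<and> D (\<lambda>M. c * f M) = c * D f)"

text \<open>Action of g in G (first factor) on S*(X) tensor (|det| boxtimes |det|^-1):
(g D)(f) = |det g| D(f(g .)).\<close>
definition act :: "('a::field \<Rightarrow> real) \<Rightarrow> 'a mat2 \<Rightarrow> (('a mat2 \<Rightarrow> complex) \<Rightarrow> complex)
     \<Rightarrow> ('a mat2 \<Rightarrow> complex) \<Rightarrow> complex" where
  "act absv g D = (\<lambda>f. complex_of_real (absv (det g)) * D (\<lambda>M. f (g ** M)))"

definition invariant1 :: "('a::field \<Rightarrow> real) \<Rightarrow> 'a mat2 set \<Rightarrow> (('a mat2 \<Rightarrow> complex) \<Rightarrow> complex) \<Rightarrow> bool" where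
  "invariant1 absv X D \<longleftrightarrow> (\<forall>g\<in>GL2. \<forall>f\<in>Sch absv X. act absv g D f = D f)"

definition iter_op :: "('a::field \<Rightarrow> real) \<Rightarrow> 'a mat2 list \<Rightarrow> (('a mat2 \<Rightarrow> complex) \<Rightarrow> complex)
     \<Rightarrow> ('a mat2 \<Rightarrow> complex) \<Rightarrow> complex" where
  "iter_op absv gs D = foldr (\<lambda>g E. (\<lambda>f. act absv g E f - E f)) gs D"

definition gen_invariant1 :: "('a::field \<Rightarrow> real) \<Rightarrow> 'a mat2 set \<Rightarrow> (('a mat2 \<Rightarrow> complex) \<Rightarrow> complex) \<Rightarrow> bool" where
  "gen_invariant1 absv X D \<longleftrightarrow> (\<exists>k::nat. \<forall>gs. length gs = Suc k \<longrightarrow> set gs \<subseteq> GL2 \<longrightarrow>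
      (\<forall>f\<in>Sch absv X. iter_op absv gs D f = 0))"

definition haar :: "('a::field \<Rightarrow> real) \<Rightarrow> (('a mat2 \<Rightarrow> complex) \<Rightarrow> complex) \<Rightarrow> bool" where
  "haar absv dg \<longleftrightarrow> is_dist absv GL2 dg \<and> (\<exists>f\<in>Sch absv GL2. dg f \<noteq> 0) \<and>
     (\<forall>f\<in>Sch absv GL2. (\<forall>M. Im (f M) = 0 \<and> Re (f M) \<ge> 0) \<longrightarrow> Im (dg f) = 0 \<and> Re (dg f) \<ge> 0) \<and>
     (\<forall>g\<in>GL2. \<forall>f\<in>Sch absv GL2. dg (\<lambda>M. f (g ** M)) = dg f)"

end

theory Submission
  imports Defs "HOL-Library.Diagonal_Subsequence"
begin

locale nalf =
  fixes absv :: "'a::field_char_0 \<Rightarrow> real"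
  assumes nlf: "nonarch_local_field absv"
begin

lemma av_nonneg[simp]: "absv x \<ge> 0" using nlf unfolding nonarch_local_field_def by blast
lemma av_zero_iff[simp]: "absv x = 0 \<longleftrightarrow> x = 0" using nlf unfolding nonarch_local_field_def by blast
lemma av_mult: "absv (x*y) = absv x * absv y" using nlf unfolding nonarch_local_field_def by blast
lemma av_ultra: "absv (x+y) \<le> max (absv x) (absv y)" using nlf unfolding nonarch_local_field_def by blast

lemma av_0[simp]: "absv 0 = 0" by simp
lemma av_pos[simp]: "absv x > 0 \<longleftrightarrow> x \<noteq> 0" using av_nonneg[of x] av_zero_iff[of x] by linarith
lemma av_1[simp]: "absv 1 = 1"
proof -
  have "absv 1 = absv 1 * absv 1" using av_mult[of 1 1] by simp
  moreover have "absv 1 \<noteq> 0" by simp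
  ultimately show ?thesis by (metis mult_cancel_left1)
qed
lemma av_m1: "absv (-1) = 1"
proof -
  have "absv (-1) * absv (-1) = 1" using av_mult[of "-1" "-1"] by simp
  moreover have "absv (-1) \<ge> 0" by simp
  ultimately show ?thesis by (metis abs_of_nonneg abs_square_eq_1 power2_eq_square)
qed
lemma av_minus[simp]: "absv (-x) = absv x"
  using av_mult[of "-1" x] av_m1 by simp
lemma av_sym: "absv (x - y) = absv (y - x)"
  by (metis av_minus minus_diff_eq)
lemma av_inverse: "absv (inverse x) = inverse (absv x)"
proof (cases "x = 0")
  case False
  have "absv (inverse x) * absv x = 1" using av_mult[of "inverse x" x] False by simp
  moreover have "absv x \<noteq> 0" using False by simp
  ultimately show ?thesis by (metis inverse_unique mult.commute)
qed simp
lemma av_divide: "absv (x / y) = absv x / absv y"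
  by (simp add: divide_inverse av_mult av_inverse)
lemma av_power: "absv (x ^ n) = absv x ^ n"
  by (induction n) (auto simp: av_mult)
lemma av_diff: "absv (x - y) \<le> max (absv x) (absv y)"
  using av_ultra[of x "-y"] by simp
lemma av_ultra_eq: "absv y < absv x \<Longrightarrow> absv (x + y) = absv x"
proof -
  assume a: "absv y < absv x"
  have "absv (x+y) \<le> absv x" using av_ultra[of x y] a by simp
  moreover have "absv x \<le> max (absv (x+y)) (absv y)" using av_ultra[of "x+y" "-y"] by simp
  ultimately show ?thesis using a by auto
qed
lemma av_add_le: "absv x \<le> e \<Longrightarrow> absv y \<le> e \<Longrightarrow> absv (x+y) \<le> e"
  using av_ultra[of x y] by simp
lemma av_diff_le: "absv x \<le> e \<Longrightarrow> absv y \<le> e \<Longrightarrow> absv (x-y) \<le> e"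
  using av_diff[of x y] by simp
lemma av_sum_le: "finite S \<Longrightarrow> e \<ge> 0 \<Longrightarrow> (\<And>i. i\<in>S \<Longrightarrow> absv (f i) \<le> e) \<Longrightarrow> absv (sum f S) \<le> e"
  by (induction S rule: finite_induct) (auto intro: av_add_le)
lemma av_mult_le: "absv x \<le> a \<Longrightarrow> absv y \<le> b \<Longrightarrow> absv (x*y) \<le> a*b"
  by (simp add: av_mult mult_mono')

definition balls :: "'a set set" where
  "balls = (\<lambda>x. {y. absv y \<le> 1 \<and> absv (y - x) < 1}) ` {x. absv x \<le> 1}"

definition pp :: 'a where
  "pp = (SOME p. 0 < absv p \<and> absv p < 1 \<and> (\<forall>x. absv x < 1 \<longrightarrow> absv x \<le> absv p) \<and>
         real (card balls) = 1 / absv p)"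

lemma pp_props: "0 < absv pp" "absv pp < 1" "\<And>x. absv x < 1 \<Longrightarrow> absv x \<le> absv pp"
   "real (card balls) = 1 / absv pp"
proof -
  have "\<exists>p. 0 < absv p \<and> absv p < 1 \<and> (\<forall>x. absv x < 1 \<longrightarrow> absv x \<le> absv p) \<and>
         real (card balls) = 1 / absv p"
    using nlf unfolding nonarch_local_field_def balls_def by blast
  from someI_ex[OF this] show "0 < absv pp" "absv pp < 1" "\<And>x. absv x < 1 \<Longrightarrow> absv x \<le> absv pp"
   "real (card balls) = 1 / absv pp" unfolding pp_def[symmetric] by auto
qed

abbreviation \<rho> where "\<rho> \<equiv> absv pp"

lemma rho_pos: "0 < \<rho>" and rho_lt1: "\<rho> < 1" using pp_props by auto
lemma pp_nz[simp]: "pp \<noteq> 0" using rho_pos by auto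

lemma lt1_le_rho: "absv x < 1 \<Longrightarrow> absv x \<le> \<rho>" using pp_props(3) by auto

definition qn :: nat where "qn = card balls"
lemma qn_rho: "real qn = 1 / \<rho>" using pp_props(4) qn_def by simp
lemma rho_qn: "\<rho> = 1 / real qn"
proof -
  have "real qn \<noteq> 0" using qn_rho rho_pos by auto
  thus ?thesis using qn_rho rho_pos by (metis divide_divide_eq_right div_by_1 divide_self_if mult_1 times_divide_eq_left)
qed
lemma qn_ge2: "qn \<ge> 2"
proof -
  have "1 / \<rho> > 1" using rho_pos rho_lt1 by (simp add: field_simps)
  hence "real qn > 1" using qn_rho by simp
  hence "qn > 1" by linarith
  thus ?thesis by linarith
qed

lemma complete: fixes s :: "nat \<Rightarrow> 'a" shows "(\<forall>e>0. \<exists>N. \<forall>m\<ge>N. \<forall>n\<ge>N. absv (s m - s n) < e) \<Longrightarrow>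
         (\<exists>l. \<forall>e>0. \<exists>N. \<forall>n\<ge>N. absv (s n - l) < e)"
proof -
  have H: "\<forall>s::nat \<Rightarrow> 'a. (\<forall>e>0. \<exists>N. \<forall>m\<ge>N. \<forall>n\<ge>N. absv (s m - s n) < e) \<longrightarrow>
         (\<exists>l. \<forall>e>0. \<exists>N. \<forall>n\<ge>N. absv (s n - l) < e)"
    using nlf unfolding nonarch_local_field_def by (elim conjE) assumption
  assume "\<forall>e>0. \<exists>N. \<forall>m\<ge>N. \<forall>n\<ge>N. absv (s m - s n) < e"
  thus ?thesis using H by blast
qed

end

context nalf
begin

lemma disc_le1:
  assumes "x \<noteq> 0" "absv x \<le> 1"
  shows "\<exists>n::nat. absv x = \<rho> ^ n"
proof -
  have "\<exists>n. \<rho> ^ n < absv x" using real_arch_pow_inv[of "absv x" \<rho>] assms rho_lt1 by simp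
  then obtain n0 where n0: "\<rho> ^ n0 < absv x" by blast
  have "\<rho> ^ Suc n0 \<le> \<rho> ^ n0" using rho_pos rho_lt1 by (simp add: power_decreasing)
  hence "\<rho> ^ Suc n0 < absv x" using n0 by linarith
  define n where "n = (LEAST n. \<rho> ^ Suc n < absv x)"
  have n1: "\<rho> ^ Suc n < absv x" unfolding n_def by (rule LeastI, fact)
  have n2: "absv x \<le> \<rho> ^ n"
  proof (cases n)
    case 0 thus ?thesis using assms by simp
  next
    case (Suc m)
    have "\<not> \<rho> ^ Suc m < absv x" using not_less_Least[of m "\<lambda>n. \<rho> ^ Suc n < absv x"] Suc n_def by simp
    thus ?thesis using Suc by simp
  qed
  define y where "y = x / pp ^ n"
  have ay: "absv y = absv x / \<rho> ^ n" unfolding y_def by (simp add: av_divide av_power)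
  have rp: "\<rho> ^ n > 0" using rho_pos by simp
  have "absv y * \<rho> ^ n \<le> 1 * \<rho> ^ n" using ay n2 rp by (simp add: field_simps)
  hence "absv y \<le> 1" using rp by (rule mult_right_le_imp_le)
  moreover have "\<rho> * \<rho> ^ n < absv y * \<rho> ^ n" using ay n1 rp by (simp add: field_simps)
  hence "absv y > \<rho>" using rp by (simp add: mult_less_cancel_right)
  ultimately have "absv y = 1" using lt1_le_rho[of y] by force
  hence "absv x = \<rho> ^ n" using ay rp by (simp add: field_simps)
  thus ?thesis by blast
qed

lemma disc:
  assumes "x \<noteq> 0"
  shows "\<exists>m::int. absv x = \<rho> powi m"
proof (cases "absv x \<le> 1")
  case True
  then obtain n::nat where "absv x = \<rho> ^ n" using disc_le1 assms by blast
  thus ?thesis by (metis power_int_of_nat)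
next
  case False
  have "absv (inverse x) \<le> 1" using False by (simp add: av_inverse inverse_le_1_iff)
  moreover have "inverse x \<noteq> 0" using assms by simp
  ultimately obtain n::nat where "absv (inverse x) = \<rho> ^ n" using disc_le1 by blast
  hence "absv x = \<rho> powi (- int n)" by (simp add: av_inverse power_int_minus) (metis inverse_inverse_eq)
  thus ?thesis by blast
qed

lemma rho_powi_inj: "\<rho> powi m = \<rho> powi n \<longleftrightarrow> m = n"
proof
  assume "\<rho> powi m = \<rho> powi n"
  show "m = n"
  proof (rule ccontr)
    assume "m \<noteq> n"
    hence "m < n \<or> n < m" by arith
    thus False
    proof
      assume "m < n" thus False using \<open>\<rho> powi m = \<rho> powi n\<close> power_int_strict_decreasing[of m n \<rho>] rho_pos rho_lt1 by simp
    next
      assume "n < m" thus False using \<open>\<rho> powi m = \<rho> powi n\<close> power_int_strict_decreasing[of n m \<rho>] rho_pos rho_lt1 by simp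
    qed
  qed
qed simp


definition ball1 :: "'a \<Rightarrow> 'a set" where "ball1 x = {y. absv y \<le> 1 \<and> absv (y - x) < 1}"

lemma balls_eq: "balls = ball1 ` {x. absv x \<le> 1}" unfolding balls_def ball1_def by simp

lemma ball1_eq: "absv (x - x') < 1 \<Longrightarrow> ball1 x = ball1 x'"
  unfolding ball1_def
proof (safe)
  fix y assume "absv (x - x') < 1" "absv (y - x) < 1"
  have "y - x' = (y - x) + (x - x')" by simp
  thus "absv (y - x') < 1" using av_ultra[of "y-x" "x-x'"] \<open>absv (x - x') < 1\<close> \<open>absv (y - x) < 1\<close> by simp
next
  fix y assume "absv (x - x') < 1" "absv (y - x') < 1"
  have "y - x = (y - x') + (x' - x)" by simp
  thus "absv (y - x) < 1" using av_ultra[of "y-x'" "x'-x"] \<open>absv (x - x') < 1\<close> \<open>absv (y - x') < 1\<close> av_sym[of x x'] by simp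
qed

lemma ball1_self: "absv x \<le> 1 \<Longrightarrow> x \<in> ball1 x" unfolding ball1_def by simp

definition Dg :: "'a set" where "Dg = (\<lambda>B. SOME y. y \<in> B) ` balls"

lemma some_ball: "absv x \<le> 1 \<Longrightarrow> (SOME y. y \<in> ball1 x) \<in> ball1 x"
  using ball1_self by (rule someI)

lemma ball1_some_eq: "absv x \<le> 1 \<Longrightarrow> ball1 (SOME y. y \<in> ball1 x) = ball1 x"
proof -
  assume "absv x \<le> 1"
  hence "absv ((SOME y. y \<in> ball1 x) - x) < 1" using some_ball[of x] unfolding ball1_def by simp
  thus ?thesis by (rule ball1_eq)
qed

lemma finite_balls: "finite balls"
proof (rule ccontr)
  assume "infinite balls" hence "qn = 0" unfolding qn_def by simp
  thus False using qn_ge2 by simp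
qed

lemma Dg_O: "d \<in> Dg \<Longrightarrow> absv d \<le> 1"
  unfolding Dg_def balls_eq using some_ball unfolding ball1_def by fastforce

lemma Dg_ex: "absv x \<le> 1 \<Longrightarrow> \<exists>d\<in>Dg. absv (x - d) \<le> \<rho>"
proof -
  assume x: "absv x \<le> 1"
  let ?d = "SOME y. y \<in> ball1 x"
  have "?d \<in> Dg" unfolding Dg_def balls_eq using x by blast
  moreover have "absv (?d - x) < 1" using some_ball[OF x] unfolding ball1_def by simp
  hence "absv (x - ?d) \<le> \<rho>" using lt1_le_rho av_sym by metis
  ultimately show ?thesis by blast
qed

lemma Dg_uniq: "d \<in> Dg \<Longrightarrow> d' \<in> Dg \<Longrightarrow> absv (d - d') \<le> \<rho> \<Longrightarrow> d = d'"
proof -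
  assume d: "d \<in> Dg" and d': "d' \<in> Dg" and dd: "absv (d - d') \<le> \<rho>"
  obtain x where x: "absv x \<le> 1" "d = (SOME y. y \<in> ball1 x)" using d unfolding Dg_def balls_eq by blast
  obtain x' where x': "absv x' \<le> 1" "d' = (SOME y. y \<in> ball1 x')" using d' unfolding Dg_def balls_eq by blast
  have "ball1 x = ball1 d" using ball1_some_eq[OF x(1)] x(2) by simp
  also have "\<dots> = ball1 d'" using dd rho_lt1 by (intro ball1_eq) simp
  also have "\<dots> = ball1 x'" using ball1_some_eq[OF x'(1)] x'(2) by simp
  finally show "d = d'" using x x' by simp
qed

lemma Dg_finite: "finite Dg" unfolding Dg_def using finite_balls by simp

lemma Dg_card: "card Dg = qn"
proof -
  have "inj_on (\<lambda>B. SOME y. y \<in> B) balls"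
  proof (rule inj_onI)
    fix B1 B2 assume "B1 \<in> balls" "B2 \<in> balls" "(SOME y. y \<in> B1) = (SOME y. y \<in> B2)"
    then obtain x1 x2 where "absv x1 \<le> 1" "absv x2 \<le> 1" "B1 = ball1 x1" "B2 = ball1 x2"
      "(SOME y. y \<in> ball1 x1) = (SOME y. y \<in> ball1 x2)" unfolding balls_eq by blast
    thus "B1 = B2" using ball1_some_eq by metis
  qed
  thus ?thesis unfolding Dg_def qn_def by (simp add: card_image)
qed

primrec Rb :: "nat \<Rightarrow> 'a set" where
  "Rb 0 = {0}"
| "Rb (Suc b) = (\<lambda>(d,c). d + pp * c) ` (Dg \<times> Rb b)"

lemma av_pp_mult_le: "absv (pp * x) \<le> \<rho> * e \<longleftrightarrow> absv x \<le> e"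
  using rho_pos by (simp add: av_mult)

lemma Rb_O: "c \<in> Rb b \<Longrightarrow> absv c \<le> 1"
proof (induction b arbitrary: c)
  case (Suc b)
  then obtain d c' where "d \<in> Dg" "c' \<in> Rb b" "c = d + pp * c'" by auto
  moreover have "absv (pp * c') \<le> 1" using Suc.IH[OF \<open>c' \<in> Rb b\<close>] rho_lt1 av_mult[of pp c'] rho_pos
    by (simp add: mult_le_one)
  ultimately show ?case using Dg_O by (metis av_add_le)
qed simp

lemma Rb_ex: "absv x \<le> 1 \<Longrightarrow> \<exists>c\<in>Rb b. absv (x - c) \<le> \<rho> ^ b"
proof (induction b arbitrary: x)
  case 0 thus ?case by simp
next
  case (Suc b)
  obtain d where d: "d \<in> Dg" "absv (x - d) \<le> \<rho>" using Dg_ex Suc.prems by blast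
  define y where "y = (x - d) / pp"
  have "absv y \<le> 1" using d rho_pos by (simp add: y_def av_divide)
  then obtain c where c: "c \<in> Rb b" "absv (y - c) \<le> \<rho> ^ b" using Suc.IH by blast
  have "x - (d + pp * c) = pp * (y - c)" unfolding y_def by (simp add: field_simps)
  hence "absv (x - (d + pp * c)) \<le> \<rho> ^ Suc b" using c(2) by (simp add: av_mult rho_pos)
  moreover have "d + pp * c \<in> Rb (Suc b)" using d c by auto
  ultimately show ?case by blast
qed

lemma Rb_uniq: "c \<in> Rb b \<Longrightarrow> c' \<in> Rb b \<Longrightarrow> absv (c - c') \<le> \<rho> ^ b \<Longrightarrow> c = c'"
proof (induction b arbitrary: c c')
  case 0 thus ?case by simp
next
  case (Suc b)
  obtain d e where de: "d \<in> Dg" "e \<in> Rb b" "c = d + pp * e" using Suc.prems by auto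
  obtain d' e' where de': "d' \<in> Dg" "e' \<in> Rb b" "c' = d' + pp * e'" using Suc.prems by auto
  have "\<rho> ^ Suc b \<le> \<rho>" using rho_pos rho_lt1 by (simp add: power_le_one mult_left_le)
  hence h: "absv (c - c') \<le> \<rho>" using Suc.prems(3) by linarith
  have "absv (pp * (e - e')) \<le> \<rho>"
    using av_mult[of pp "e - e'"] Rb_O[OF de(2)] Rb_O[OF de'(2)] av_diff_le[of e 1 e'] rho_pos
    by (simp add: mult_le_cancel_left1)
  moreover have "d - d' = (c - c') - pp * (e - e')" using de de' by (simp add: algebra_simps)
  ultimately have "absv (d - d') \<le> \<rho>" using h av_diff_le by metis
  hence dd: "d = d'" using Dg_uniq de de' by blast
  hence "absv (pp * (e - e')) \<le> \<rho> * \<rho> ^ b" using Suc.prems(3) de de' by (simp add: algebra_simps)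
  hence "absv (e - e') \<le> \<rho> ^ b" by (simp add: av_pp_mult_le)
  hence "e = e'" using Suc.IH de de' by blast
  thus ?case using dd de de' by simp
qed

lemma Rb_finite: "finite (Rb b)" by (induction b) (auto simp: Dg_finite)

lemma Rb_card: "card (Rb b) = qn ^ b"
proof (induction b)
  case (Suc b)
  have "inj_on (\<lambda>(d,c). d + pp * c) (Dg \<times> Rb b)"
  proof (rule inj_onI, clarify)
    fix d c d' c' assume a: "d \<in> Dg" "c \<in> Rb b" "d' \<in> Dg" "c' \<in> Rb b" "d + pp * c = d' + pp * c'"
    have "d + pp * c \<in> Rb (Suc b)" "d' + pp * c' \<in> Rb (Suc b)" using a by auto
    have "absv (d - d') \<le> \<rho>"
    proof -
      have "d - d' = pp * (c' - c)" using a(5) by (simp add: algebra_simps)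
      thus ?thesis using Rb_O[OF a(2)] Rb_O[OF a(4)] av_diff_le[of c' 1 c] rho_pos
        by (simp add: av_mult mult_le_cancel_left1)
    qed
    hence "d = d'" using Dg_uniq a by blast
    thus "d = d' \<and> c = c'" using a(5) by simp
  qed
  thus ?case using Suc by (simp add: card_image card_cartesian_product Dg_card)
qed simp

lemma Rb_split: "Rb (r + t) = (\<lambda>(c1,c2). c1 + pp ^ r * c2) ` (Rb r \<times> Rb t)"
proof (induction r)
  case 0
  show ?case by (force simp: image_iff)
next
  case (Suc r)
  have "Rb (Suc r + t) = (\<lambda>(d,c). d + pp * c) ` (Dg \<times> Rb (r + t))" by simp
  also have "\<dots> = {d + pp * (c1 + pp ^ r * c2) | d c1 c2. d \<in> Dg \<and> c1 \<in> Rb r \<and> c2 \<in> Rb t}"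
    unfolding Suc by (auto simp: image_iff)
  also have "\<dots> = (\<lambda>(c1,c2). c1 + pp ^ Suc r * c2) ` (Rb (Suc r) \<times> Rb t)"
    by (auto simp: image_iff algebra_simps, (blast)+)
  finally show ?case .
qed

lemma Rb_split_inj: "inj_on (\<lambda>(c1,c2). c1 + pp ^ r * c2) (Rb r \<times> Rb t)"
proof (rule inj_onI, clarify)
  fix c1 c2 c1' c2' assume a: "c1 \<in> Rb r" "c2 \<in> Rb t" "c1' \<in> Rb r" "c2' \<in> Rb t"
    "c1 + pp ^ r * c2 = c1' + pp ^ r * c2'"
  have "c1 - c1' = pp ^ r * (c2' - c2)" using a(5) by (simp add: algebra_simps)
  hence "absv (c1 - c1') \<le> \<rho> ^ r" using Rb_O[OF a(2)] Rb_O[OF a(4)] av_diff_le[of c2' 1 c2]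
    by (simp add: av_mult av_power mult_le_cancel_left1 rho_pos)
  hence "c1 = c1'" using Rb_uniq a by blast
  thus "c1 = c1' \<and> c2 = c2'" using a(5) by simp
qed

lemma Rb_sum_mod:
  fixes G :: "'a \<Rightarrow> complex"
  assumes "r \<le> b" and G: "\<And>c c'. absv c \<le> 1 \<Longrightarrow> absv (c - c') \<le> \<rho> ^ r \<Longrightarrow> G c = G c'"
  shows "(\<Sum>c\<in>Rb b. G c) = of_nat (qn ^ (b - r)) * (\<Sum>c\<in>Rb r. G c)"
proof -
  have b: "b = r + (b - r)" using assms by simp
  have "(\<Sum>c\<in>Rb b. G c) = (\<Sum>c\<in>Rb (r + (b - r)). G c)" using b by simp
  also have "\<dots> = (\<Sum>x\<in>Rb r \<times> Rb (b - r). G (case x of (c1,c2) \<Rightarrow> c1 + pp ^ r * c2))"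
    unfolding Rb_split by (subst sum.reindex[OF Rb_split_inj]) (simp add: case_prod_beta)
  also have "\<dots> = (\<Sum>x\<in>Rb r \<times> Rb (b - r). G (fst x))"
  proof (rule sum.cong, simp)
    fix x assume "x \<in> Rb r \<times> Rb (b - r)"
    then obtain c1 c2 where x: "x = (c1, c2)" and "c1 \<in> Rb r" "c2 \<in> Rb (b - r)" by blast
    have "absv (c1 + pp ^ r * c2 - c1) \<le> \<rho> ^ r" using Rb_O[OF \<open>c2 \<in> Rb (b - r)\<close>]
      by (simp add: av_mult av_power mult_le_cancel_left1 rho_pos)
    moreover have "absv (c1 + pp ^ r * c2) \<le> 1" using Rb_split[of r "b-r"] \<open>c1 \<in> Rb r\<close> \<open>c2 \<in> Rb (b - r)\<close> Rb_O
      by blast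
    ultimately show "G (case x of (c1, c2) \<Rightarrow> c1 + pp ^ r * c2) = G (fst x)" using G x by simp
  qed
  also have "\<dots> = (\<Sum>c1\<in>Rb r. \<Sum>c2\<in>Rb (b-r). G c1)"
    using sum.cartesian_product[of "\<lambda>c1 c2. G c1" "Rb (b-r)" "Rb r"] by (simp add: case_prod_beta)
  also have "\<dots> = of_nat (qn ^ (b - r)) * (\<Sum>c\<in>Rb r. G c)" by (simp add: Rb_card sum_distrib_right sum_distrib_left mult.commute)
  finally show ?thesis .
qed

end

context nalf
begin

lemma rho_pow_small: "e > 0 \<Longrightarrow> \<exists>k. \<rho> ^ k < e"
  using real_arch_pow_inv[of e \<rho>] rho_lt1 by simp

lemma av_close_eq: "absv (x - y) < absv y \<Longrightarrow> absv x = absv y"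
  using av_ultra_eq[of "x - y" y] by simp


lemma BW:
  fixes s :: "nat \<Rightarrow> 'a"
  assumes s: "\<And>n. absv (s n) \<le> 1"
  shows "\<exists>l (\<sigma>::nat\<Rightarrow>nat). strict_mono \<sigma> \<and> absv l \<le> 1 \<and> (\<forall>e>0. \<exists>N. \<forall>n\<ge>N. absv (s (\<sigma> n) - l) < e)"
proof -
  interpret S: subseqs "\<lambda>k \<sigma>. \<exists>c. \<forall>n. absv (s (\<sigma> n) - c) \<le> \<rho> ^ k"
  proof
    fix k and \<sigma>0 :: "nat \<Rightarrow> nat" assume "strict_mono \<sigma>0"
    define h where "h n = (SOME c. c \<in> Rb k \<and> absv (s (\<sigma>0 n) - c) \<le> \<rho> ^ k)" for n
    have h: "h n \<in> Rb k \<and> absv (s (\<sigma>0 n) - h n) \<le> \<rho> ^ k" for n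
      unfolding h_def
    proof (rule someI_ex)
      show "\<exists>c. c \<in> Rb k \<and> absv (s (\<sigma>0 n) - c) \<le> \<rho> ^ k" using Rb_ex[OF s[of "\<sigma>0 n"], of k] by blast
    qed
    have "finite (h ` UNIV)" using h Rb_finite[of k] by (meson finite_subset image_subset_iff)
    then obtain n0 where inf: "infinite {n. h n = h n0}" using pigeonhole_infinite[of "UNIV::nat set" h] by auto
    define r' where "r' = enumerate {n. h n = h n0}"
    have "strict_mono r'" unfolding r'_def using inf by (intro strict_monoI enumerate_mono)
    moreover have "\<forall>n. absv (s ((\<sigma>0 \<circ> r') n) - h n0) \<le> \<rho> ^ k"
    proof
      fix n
      have "h (r' n) = h n0" using enumerate_in_set[OF inf, of n] r'_def by simp
      thus "absv (s ((\<sigma>0 \<circ> r') n) - h n0) \<le> \<rho> ^ k" using h[of "r' n"] by simp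
    qed
    ultimately show "\<exists>r'::nat\<Rightarrow>nat. strict_mono r' \<and> (\<exists>c. \<forall>n. absv (s ((\<sigma>0 \<circ> r') n) - c) \<le> \<rho> ^ k)"
      by blast
  qed
  let ?d = S.diagseq
  have hold: "\<exists>c. \<forall>n. absv (s ((?d \<circ> (+) (Suc k)) n) - c) \<le> \<rho> ^ k" for k
    by (rule S.diagseq_holds) auto
  have cau: "absv (s (?d m) - s (?d n)) \<le> \<rho> ^ k" if "m \<ge> Suc k" "n \<ge> Suc k" for m n k
  proof -
    obtain c where c: "\<forall>n. absv (s (?d (Suc k + n)) - c) \<le> \<rho> ^ k" using hold[of k] by auto
    have e: "m = Suc k + (m - Suc k)" "n = Suc k + (n - Suc k)" using that by auto
    have "absv (s (?d (Suc k + (m - Suc k))) - c) \<le> \<rho> ^ k" "absv (s (?d (Suc k + (n - Suc k))) - c) \<le> \<rho> ^ k"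
      using c by blast+
    hence "absv (s (?d m) - c) \<le> \<rho> ^ k" "absv (s (?d n) - c) \<le> \<rho> ^ k" using e by simp_all
    moreover have "s (?d m) - s (?d n) = (s (?d m) - c) - (s (?d n) - c)" by simp
    ultimately show ?thesis using av_diff_le[of "s (?d m) - c" "\<rho> ^ k" "s (?d n) - c"] by simp
  qed
  have "\<forall>e>0. \<exists>N. \<forall>m\<ge>N. \<forall>n\<ge>N. absv ((s \<circ> ?d) m - (s \<circ> ?d) n) < e"
  proof (intro allI impI)
    fix e :: real assume "e > 0"
    then obtain k where "\<rho> ^ k < e" using rho_pow_small by blast
    have "\<forall>m\<ge>Suc k. \<forall>n\<ge>Suc k. absv ((s \<circ> ?d) m - (s \<circ> ?d) n) < e"
    proof (intro allI impI)
      fix m n assume "m \<ge> Suc k" "n \<ge> Suc k"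
      from cau[OF this] \<open>\<rho> ^ k < e\<close> show "absv ((s \<circ> ?d) m - (s \<circ> ?d) n) < e" by simp
    qed
    thus "\<exists>N. \<forall>m\<ge>N. \<forall>n\<ge>N. absv ((s \<circ> ?d) m - (s \<circ> ?d) n) < e" by blast
  qed
  then obtain l where l: "\<forall>e>0. \<exists>N. \<forall>n\<ge>N. absv ((s \<circ> ?d) n - l) < e" using complete by blast
  have "absv l \<le> 1"
  proof (rule ccontr)
    assume "\<not> absv l \<le> 1"
    hence "absv l > 0" by linarith
    then obtain N where "\<forall>n\<ge>N. absv ((s \<circ> ?d) n - l) < absv l" using l by blast
    hence "absv (s (?d N) - l) < absv l" by simp
    hence "absv (s (?d N)) = absv l" by (rule av_close_eq)
    thus False using s[of "?d N"] \<open>\<not> absv l \<le> 1\<close> by simp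
  qed
  thus ?thesis using l S.subseq_diagseq by auto
qed

end

lemma mult_entry: "((A::'a::semiring_1 mat2) ** B)$i$j = A$i$1 * B$1$j + A$i$2 * B$2$j"
  by (simp add: matrix_matrix_mult_def sum_2)

lemma mat2_eq: "(M::'a mat2) = N \<longleftrightarrow> M$1$1 = N$1$1 \<and> M$1$2 = N$1$2 \<and> M$2$1 = N$2$1 \<and> M$2$2 = N$2$2"
  by (auto simp: vec_eq_iff forall_2)

definition mk :: "'a \<Rightarrow> 'a \<Rightarrow> 'a \<Rightarrow> 'a \<Rightarrow> 'a mat2" where
  "mk a b c d = (\<chi> i j. if i = 1 then (if j = 1 then a else b) else (if j = 1 then c else d))"

lemma mk_entries[simp]: "mk a b c d $ 1 $ 1 = a" "mk a b c d $ 1 $ 2 = b" "mk a b c d $ 2 $ 1 = c" "mk a b c d $ 2 $ 2 = d"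
  by (simp_all add: mk_def)

lemma mat_entries[simp]: "(mat x :: 'a::zero mat2) $ 1 $ 1 = x" "(mat x :: 'a mat2) $ 1 $ 2 = 0"
  "(mat x :: 'a mat2) $ 2 $ 1 = 0" "(mat x :: 'a mat2) $ 2 $ 2 = x"
  by (simp_all add: mat_def)

lemma det_mk: "det (mk a b c d :: 'a::comm_ring_1 mat2) = a * d - b * c"
  by (simp add: det_2)

lemma det_mult2: "det ((A::'a::comm_ring_1 mat2) ** B) = det A * det B" by (rule det_mul)

definition inv2 :: "'a::field mat2 \<Rightarrow> 'a mat2" where
  "inv2 g = mk (g$2$2 / det g) (- g$1$2 / det g) (- g$2$1 / det g) (g$1$1 / det g)"

lemma inv2_left: "det g \<noteq> 0 \<Longrightarrow> inv2 g ** g = mat 1"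
  apply (simp add: mat2_eq mult_entry inv2_def)
  apply (simp_all add: field_simps)
  apply (simp_all add: det_2 algebra_simps)
  done

lemma inv2_right: "det g \<noteq> 0 \<Longrightarrow> g ** inv2 g = mat 1"
  apply (simp add: mat2_eq mult_entry inv2_def)
  apply (simp_all add: field_simps)
  apply (simp_all add: det_2 algebra_simps)
  done

lemma inv2_cancel: "det g \<noteq> 0 \<Longrightarrow> inv2 g ** (g ** M) = M"
  by (simp add: matrix_mul_assoc inv2_left)

lemma inv2_cancel': "det g \<noteq> 0 \<Longrightarrow> g ** (inv2 g ** M) = M"
  by (simp add: matrix_mul_assoc inv2_right)

lemma det_inv2: "det g \<noteq> 0 \<Longrightarrow> det (inv2 g) = inverse (det g)"
  using det_mul[of "inv2 g" g] inv2_left[of g] by (simp add: field_simps)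

context nalf
begin

definition bnd :: "real \<Rightarrow> 'a mat2 \<Rightarrow> bool" where
  "bnd e M \<longleftrightarrow> (\<forall>i j. absv (M$i$j) \<le> e)"

lemma bnd_iff: "bnd e M \<longleftrightarrow> absv (M$1$1) \<le> e \<and> absv (M$1$2) \<le> e \<and> absv (M$2$1) \<le> e \<and> absv (M$2$2) \<le> e"
  unfolding bnd_def by (auto simp: forall_2)

lemma mdist_set: "{absv (M$i$j - N$i$j) | i j. True} = (\<lambda>(i,j). absv (M$i$j - N$i$j)) ` UNIV"
  by auto

lemma mdist_le: "mdist absv M N \<le> e \<longleftrightarrow> (\<forall>i j. absv (M$i$j - N$i$j) \<le> e)"
  unfolding mdist_def mdist_set by (subst Max_le_iff) auto

lemma mdist_lt: "mdist absv M N < e \<longleftrightarrow> (\<forall>i j. absv (M$i$j - N$i$j) < e)"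
  unfolding mdist_def mdist_set by (subst Max_less_iff) auto

lemma mdist_ge: "absv (M$i$j - N$i$j) \<le> mdist absv M N"
  using mdist_le[of M N "mdist absv M N"] by simp

lemma mdist_nonneg: "mdist absv M N \<ge> 0"
  using mdist_ge[of M 1 1 N] av_nonneg[of "M$1$1 - N$1$1"] by linarith

lemma mdist_sym: "mdist absv M N = mdist absv N M"
  unfolding mdist_def by (metis av_sym)

lemma mdist_bnd: "mdist absv M N \<le> e \<longleftrightarrow> bnd e (M - N)"
  unfolding mdist_le bnd_def by simp

lemma mdist_ultra: "mdist absv M P \<le> max (mdist absv M N) (mdist absv N P)"
proof -
  have "absv (M$i$j - P$i$j) \<le> max (mdist absv M N) (mdist absv N P)" for i j
  proof -
    have "M$i$j - P$i$j = (M$i$j - N$i$j) + (N$i$j - P$i$j)" by simp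
    hence "absv (M$i$j - P$i$j) \<le> max (absv (M$i$j - N$i$j)) (absv (N$i$j - P$i$j))" using av_ultra by metis
    thus ?thesis using mdist_ge[of M i j N] mdist_ge[of N i j P] by linarith
  qed
  thus ?thesis using mdist_le by blast
qed

lemma mdist_trans_le: "mdist absv M N \<le> e \<Longrightarrow> mdist absv N P \<le> e \<Longrightarrow> mdist absv M P \<le> e"
  using mdist_ultra[of M P N] by simp

lemma mdist_trans_lt: "mdist absv M N < e \<Longrightarrow> mdist absv N P < e \<Longrightarrow> mdist absv M P < e"
  using mdist_ultra[of M P N] by simp

lemma bnd_mono: "bnd a M \<Longrightarrow> a \<le> b \<Longrightarrow> bnd b M"
  unfolding bnd_def by (meson order_trans)

lemma bnd_add: "bnd e M \<Longrightarrow> bnd e N \<Longrightarrow> bnd e (M + N)"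
  unfolding bnd_def by (simp add: av_add_le)

lemma bnd_diff: "bnd e M \<Longrightarrow> bnd e N \<Longrightarrow> bnd e (M - N)"
  unfolding bnd_def by (simp add: av_diff_le)

lemma bnd_mult: "bnd a A \<Longrightarrow> bnd b B \<Longrightarrow> a \<ge> 0 \<Longrightarrow> bnd (a * b) (A ** B)"
proof -
  assume A: "bnd a A" and B: "bnd b B" and a: "a \<ge> 0"
  have "absv (A$i$k * B$k$j) \<le> a * b" for i j k
    using A B a unfolding bnd_def by (simp add: av_mult mult_mono')
  thus ?thesis unfolding bnd_def mult_entry by (simp add: av_add_le)
qed

lemma bnd_det: "bnd a A \<Longrightarrow> a \<ge> 0 \<Longrightarrow> absv (det A) \<le> a * a"
proof -
  assume A: "bnd a A" and a: "a \<ge> 0"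
  have "absv (A$i$k * A$l$j) \<le> a * a" for i j k l
    using A a unfolding bnd_def by (simp add: av_mult mult_mono')
  thus ?thesis unfolding det_2 by (simp add: av_diff_le)
qed

lemma det_diff_bnd:
  assumes "bnd a M" "bnd a N" "mdist absv M N \<le> e" "a \<ge> 0" "e \<ge> 0"
  shows "absv (det M - det N) \<le> a * e"
proof -
  have d: "bnd e (M - N)" using assms mdist_bnd by blast
  have "det M - det N = (M$1$1 - N$1$1) * M$2$2 + N$1$1 * (M$2$2 - N$2$2)
     - ((M$1$2 - N$1$2) * M$2$1 + N$1$2 * (M$2$1 - N$2$1))"
    unfolding det_2 by (simp add: algebra_simps)
  moreover have "absv ((M$i$j - N$i$j) * M$k$l) \<le> a * e" for i j k l
    using assms d unfolding bnd_def by (simp add: av_mult mult_mono' mult.commute)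
  moreover have "absv (N$i$j * (M$k$l - N$k$l)) \<le> a * e" for i j k l
    using assms d unfolding bnd_def by (simp add: av_mult mult_mono')
  ultimately show ?thesis by (simp add: av_add_le av_diff_le)
qed

definition nrm :: "'a mat2 \<Rightarrow> real" where "nrm M = mdist absv M 0"

lemma bnd_nrm: "bnd (nrm M) M"
  unfolding bnd_def nrm_def using mdist_ge[of M _ _ 0] by simp

lemma nrm_nonneg: "nrm M \<ge> 0" unfolding nrm_def by (rule mdist_nonneg)

lemma mdist_mult_left: "mdist absv (g ** M) (g ** N) \<le> nrm g * mdist absv M N"
proof -
  have "g ** M - g ** N = g ** (M - N)" by (simp add: mat2_eq mult_entry algebra_simps)
  moreover have "bnd (nrm g * mdist absv M N) (g ** (M - N))"
    using bnd_mult[of "nrm g" g "mdist absv M N" "M - N"] bnd_nrm[of g] mdist_bnd[of M N] nrm_nonneg[of g] by blast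
  ultimately show ?thesis using mdist_bnd by metis
qed

lemma rho_inv_pow: "\<exists>s::nat. c \<le> inverse \<rho> ^ s"
proof -
  have "1 < inverse \<rho>" using rho_pos rho_lt1 by (simp add: one_less_inverse)
  from real_arch_pow[OF this, of c] show ?thesis by (blast intro: less_imp_le)
qed

lemma inv_rho_pow_pos: "inverse \<rho> ^ s > 0" using rho_pos by simp

end

context nalf
begin

lemma BWk:
  fixes s :: "nat \<Rightarrow> 'a"
  assumes s: "\<And>n. absv (s n) \<le> inverse \<rho> ^ k"
  shows "\<exists>l (\<sigma>::nat\<Rightarrow>nat). strict_mono \<sigma> \<and> absv l \<le> inverse \<rho> ^ k \<and> (\<forall>e>0. \<exists>N. \<forall>n\<ge>N. absv (s (\<sigma> n) - l) < e)"
proof -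
  have rk: "\<rho> ^ k > 0" using rho_pos by simp
  have "absv (s n * pp ^ k) \<le> 1" for n
  proof -
    have "absv (s n * pp ^ k) = absv (s n) * \<rho> ^ k" by (simp add: av_mult av_power)
    also have "\<dots> \<le> inverse \<rho> ^ k * \<rho> ^ k" using s rk by (simp add: mult_right_mono)
    also have "\<dots> = 1" using rho_pos by (simp add: power_inverse[symmetric] field_simps)
    finally show ?thesis .
  qed
  then obtain l \<sigma> where l: "strict_mono (\<sigma>::nat\<Rightarrow>nat)" "absv l \<le> 1"
     "\<forall>e>0. \<exists>N. \<forall>n\<ge>N. absv (s (\<sigma> n) * pp ^ k - l) < e"
    using BW[of "\<lambda>n. s n * pp ^ k"] by blast
  have "absv (l / pp ^ k) = absv l / \<rho> ^ k" by (simp add: av_divide av_power)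
  also have "\<dots> \<le> 1 / \<rho> ^ k" using l(2) rk by (simp add: divide_right_mono)
  also have "\<dots> = inverse \<rho> ^ k" by (simp add: power_inverse divide_inverse)
  finally have "absv (l / pp ^ k) \<le> inverse \<rho> ^ k" .
  moreover have "\<forall>e>0. \<exists>N. \<forall>n\<ge>N. absv (s (\<sigma> n) - l / pp ^ k) < e"
  proof (intro allI impI)
    fix e :: real assume "e > 0"
    then obtain N where N: "\<forall>n\<ge>N. absv (s (\<sigma> n) * pp ^ k - l) < e * \<rho> ^ k" using l(3) rk by force
    have "absv (s (\<sigma> n) - l / pp ^ k) < e" if "n \<ge> N" for n
    proof -
      have "s (\<sigma> n) - l / pp ^ k = (s (\<sigma> n) * pp ^ k - l) / pp ^ k" by (simp add: field_simps)
      hence "absv (s (\<sigma> n) - l / pp ^ k) = absv (s (\<sigma> n) * pp ^ k - l) / \<rho> ^ k" by (simp add: av_divide av_power)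
      also have "\<dots> < e" using N that rk by (simp add: divide_less_eq)
      finally show ?thesis .
    qed
    thus "\<exists>N. \<forall>n\<ge>N. absv (s (\<sigma> n) - l / pp ^ k) < e" by blast
  qed
  ultimately show ?thesis using l(1) by blast
qed

lemma conv_subseq:
  fixes x :: "nat \<Rightarrow> 'a"
  assumes "\<forall>e>0. \<exists>N. \<forall>n\<ge>N. absv (x n - l) < e" "strict_mono (\<tau>::nat\<Rightarrow>nat)"
  shows "\<forall>e>0. \<exists>N. \<forall>n\<ge>N. absv (x (\<tau> n) - l) < e"
proof (intro allI impI)
  fix e :: real assume "e > 0"
  then obtain N where N: "\<forall>n\<ge>N. absv (x n - l) < e" using assms(1) by blast
  have "\<forall>n\<ge>N. absv (x (\<tau> n) - l) < e"
  proof (intro allI impI)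
    fix n assume "n \<ge> N"
    hence "\<tau> n \<ge> N" using seq_suble[OF assms(2), of n] by simp
    thus "absv (x (\<tau> n) - l) < e" using N by blast
  qed
  thus "\<exists>N. \<forall>n\<ge>N. absv (x (\<tau> n) - l) < e" by blast
qed

lemma BW_fin:
  fixes x :: "nat \<Rightarrow> 'i \<Rightarrow> 'a"
  assumes "finite I" "\<And>n i. i \<in> I \<Longrightarrow> absv (x n i) \<le> inverse \<rho> ^ k"
  shows "\<exists>l (\<sigma>::nat\<Rightarrow>nat). strict_mono \<sigma> \<and> (\<forall>i\<in>I. absv (l i) \<le> inverse \<rho> ^ k) \<and>
            (\<forall>e>0. \<exists>N. \<forall>n\<ge>N. \<forall>i\<in>I. absv (x (\<sigma> n) i - l i) < e)"
  using assms
proof (induction I rule: finite_induct)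
  case empty
  show ?case by (rule exI[of _ "\<lambda>i. 0"], rule exI[of _ id]) (simp add: strict_mono_def)
next
  case (insert a I)
  obtain l \<sigma> where l: "strict_mono (\<sigma>::nat\<Rightarrow>nat)" "\<forall>i\<in>I. absv (l i) \<le> inverse \<rho> ^ k"
     "\<forall>e>0. \<exists>N. \<forall>n\<ge>N. \<forall>i\<in>I. absv (x (\<sigma> n) i - l i) < e" using insert by force
  obtain la \<tau> where t: "strict_mono (\<tau>::nat\<Rightarrow>nat)" "absv la \<le> inverse \<rho> ^ k"
     "\<forall>e>0. \<exists>N. \<forall>n\<ge>N. absv (x (\<sigma> (\<tau> n)) a - la) < e"
    using BWk[of "\<lambda>n. x (\<sigma> n) a" k] insert.prems by force
  define l' where "l' = l(a := la)"
  have "strict_mono (\<sigma> \<circ> \<tau>)" using l(1) t(1) by (simp add: strict_mono_def)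
  moreover have "\<forall>i\<in>insert a I. absv (l' i) \<le> inverse \<rho> ^ k" using l(2) t(2) l'_def by auto
  moreover have "\<forall>e>0. \<exists>N. \<forall>n\<ge>N. \<forall>i\<in>insert a I. absv (x ((\<sigma> \<circ> \<tau>) n) i - l' i) < e"
  proof (intro allI impI)
    fix e :: real assume e: "e > 0"
    obtain N1 where N1: "\<forall>n\<ge>N1. \<forall>i\<in>I. absv (x (\<sigma> n) i - l i) < e" using l(3) e by blast
    obtain N2 where N2: "\<forall>n\<ge>N2. absv (x (\<sigma> (\<tau> n)) a - la) < e" using t(3) e by blast
    have "\<forall>i\<in>insert a I. absv (x ((\<sigma> \<circ> \<tau>) n) i - l' i) < e" if "n \<ge> max N1 N2" for n
    proof
      fix i assume i: "i \<in> insert a I"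
      show "absv (x ((\<sigma> \<circ> \<tau>) n) i - l' i) < e"
      proof (cases "i = a")
        case True thus ?thesis using N2 that l'_def by simp
      next
        case False
        hence "i \<in> I" using i by simp
        moreover have "\<tau> n \<ge> N1" using seq_suble[OF t(1), of n] that by simp
        ultimately show ?thesis using N1 False l'_def by simp
      qed
    qed
    thus "\<exists>N. \<forall>n\<ge>N. \<forall>i\<in>insert a I. absv (x ((\<sigma> \<circ> \<tau>) n) i - l' i) < e" by blast
  qed
  ultimately show ?case by blast
qed

lemma BW_mat:
  assumes "\<And>n. bnd (inverse \<rho> ^ k) (A n)"
  shows "\<exists>L (\<sigma>::nat\<Rightarrow>nat). strict_mono \<sigma> \<and> bnd (inverse \<rho> ^ k) L \<and> (\<forall>e>0. \<exists>N. \<forall>n\<ge>N. mdist absv (A (\<sigma> n)) L < e)"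
proof -
  obtain l \<sigma> where l: "strict_mono (\<sigma>::nat\<Rightarrow>nat)" "\<forall>i\<in>UNIV. absv (l i) \<le> inverse \<rho> ^ k"
     "\<forall>e>0. \<exists>N. \<forall>n\<ge>N. \<forall>i\<in>UNIV. absv ((\<lambda>n (i,j). A n $ i $ j) (\<sigma> n) i - l i) < e"
    using BW_fin[of "UNIV :: (2 \<times> 2) set" "\<lambda>n (i,j). A n $ i $ j" k] assms unfolding bnd_def by force
  define L :: "'a mat2" where "L = (\<chi> i j. l (i,j))"
  have "bnd (inverse \<rho> ^ k) L" using l(2) unfolding bnd_def L_def by simp
  moreover have "\<forall>e>0. \<exists>N. \<forall>n\<ge>N. mdist absv (A (\<sigma> n)) L < e"
    using l(3) unfolding mdist_lt L_def by fastforce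
  ultimately show ?thesis using l(1) by blast
qed

lemma limit_bnd:
  fixes A :: "nat \<Rightarrow> 'a mat2"
  assumes "\<And>n. bnd c (A n)" "\<forall>e>0. \<exists>N. \<forall>n\<ge>N. mdist absv (A n) L < e"
  shows "bnd c L"
  unfolding bnd_def
proof (intro allI, rule ccontr)
  fix i j assume "\<not> absv (L$i$j) \<le> c"
  have "c \<ge> 0" using assms(1)[of 0] av_nonneg[of "A 0 $ i $ j"] unfolding bnd_def by (meson order_trans)
  hence "absv (L$i$j) > 0" using \<open>\<not> absv (L$i$j) \<le> c\<close> by linarith
  then obtain N where "\<forall>n\<ge>N. mdist absv (A n) L < absv (L$i$j)" using assms(2) by blast
  hence "absv (A N $ i $ j - L$i$j) < absv (L$i$j)" using mdist_ge[of "A N" i j L] by fastforce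
  hence "absv (A N $ i $ j) = absv (L$i$j)" by (rule av_close_eq)
  moreover have "absv (A N $ i $ j) \<le> c" using assms(1)[of N] unfolding bnd_def by blast
  ultimately show False using \<open>\<not> absv (L$i$j) \<le> c\<close> by simp
qed

lemma bnd_close:
  assumes "bnd c M" "mdist absv N M \<le> c" shows "bnd c N"
proof -
  have "absv (N$i$j) \<le> c" for i j
  proof -
    have "N$i$j = (N$i$j - M$i$j) + M$i$j" by simp
    moreover have "absv (N$i$j - M$i$j) \<le> c" using mdist_ge[of N i j M] assms(2) by linarith
    moreover have "absv (M$i$j) \<le> c" using assms(1) unfolding bnd_def by blast
    ultimately show ?thesis using av_add_le by metis
  qed
  thus ?thesis unfolding bnd_def by blast
qed

lemma det_locconst:
  assumes "det L \<noteq> 0"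
  shows "\<exists>\<delta>>0. \<forall>N. mdist absv N L < \<delta> \<longrightarrow> absv (det N) = absv (det L)"
proof -
  define a where "a = max (nrm L) 1"
  have a: "a \<ge> 1" "bnd a L" using bnd_nrm[of L] bnd_mono a_def by auto
  define \<delta> where "\<delta> = min 1 (absv (det L) / a)"
  have dpos: "\<delta> > 0" using assms a unfolding \<delta>_def by simp
  have "absv (det N) = absv (det L)" if N: "mdist absv N L < \<delta>" for N
  proof -
    have "mdist absv N L \<le> a" using N a unfolding \<delta>_def by linarith
    hence bN: "bnd a N" using bnd_close a by blast
    have "absv (det N - det L) \<le> a * mdist absv N L"
      using det_diff_bnd[OF bN a(2) order_refl] a mdist_nonneg by simp
    also have "\<dots> < absv (det L)" using N a unfolding \<delta>_def by (simp add: pos_less_divide_eq mult.commute)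
    finally show ?thesis by (rule av_close_eq)
  qed
  thus ?thesis using dpos by blast
qed

lemma limit_det:
  fixes A :: "nat \<Rightarrow> 'a mat2"
  assumes "\<And>n. bnd c (A n)" "\<And>n. absv (det (A n)) \<ge> d" "d > 0" "c \<ge> 0"
    "\<forall>e>0. \<exists>N. \<forall>n\<ge>N. mdist absv (A n) L < e"
  shows "absv (det L) \<ge> d"
proof (rule ccontr)
  assume "\<not> absv (det L) \<ge> d"
  have bL: "bnd c L" using limit_bnd assms by blast
  have cpos: "c > 0"
  proof (rule ccontr)
    assume "\<not> c > 0" hence "c = 0" using assms by simp
    hence "\<forall>i j. A 0 $ i $ j = 0" using assms(1)[of 0] unfolding bnd_def by (metis av_nonneg av_zero_iff order_antisym)
    hence "A 0 = 0" by (simp add: vec_eq_iff)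
    thus False using assms(2)[of 0] assms(3) by (simp add: det_2)
  qed
  obtain N where N: "\<forall>n\<ge>N. mdist absv (A n) L < d / c" using assms(5) assms(3) cpos by force
  have "absv (det (A N) - det L) \<le> c * mdist absv (A N) L"
    using det_diff_bnd[OF assms(1)[of N] bL order_refl] assms mdist_nonneg by simp
  also have "\<dots> < d" using N[rule_format, of N] cpos by (simp add: pos_less_divide_eq mult.commute)
  finally have "absv (det (A N) - det L) < d" .
  hence "absv (det (A N)) < d" using \<open>\<not> absv (det L) \<ge> d\<close> av_ultra[of "det (A N) - det L" "det L"] by simp
  thus False using assms(2)[of N] by simp
qed

lemma compact_ball: "compact_M absv {M. bnd (inverse \<rho> ^ k) M}"
  unfolding compact_M_def
proof (intro allI impI)
  fix A :: "nat \<Rightarrow> 'a mat2" assume "\<forall>n. A n \<in> {M. bnd (inverse \<rho> ^ k) M}"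
  then obtain L \<sigma> where L: "strict_mono (\<sigma>::nat\<Rightarrow>nat)" "bnd (inverse \<rho> ^ k) L"
    "\<forall>e>0. \<exists>N. \<forall>n\<ge>N. mdist absv (A (\<sigma> n)) L < e" using BW_mat[of k A] by auto
  thus "\<exists>l\<in>{M. bnd (inverse \<rho> ^ k) M}. \<exists>r::nat\<Rightarrow>nat. strict_mono r \<and> (\<forall>e>0. \<exists>N. \<forall>n\<ge>N. mdist absv (A (r n)) l < e)"
    by blast
qed

lemma compact_ball_det: "d > 0 \<Longrightarrow> compact_M absv {M. bnd (inverse \<rho> ^ k) M \<and> absv (det M) \<ge> d}"
  unfolding compact_M_def
proof (intro allI impI)
  fix A :: "nat \<Rightarrow> 'a mat2" assume d: "d > 0" and A: "\<forall>n. A n \<in> {M. bnd (inverse \<rho> ^ k) M \<and> absv (det M) \<ge> d}"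
  then obtain L \<sigma> where L: "strict_mono (\<sigma>::nat\<Rightarrow>nat)" "bnd (inverse \<rho> ^ k) L"
    "\<forall>e>0. \<exists>N. \<forall>n\<ge>N. mdist absv (A (\<sigma> n)) L < e" using BW_mat[of k A] by auto
  have "absv (det L) \<ge> d"
    by (rule limit_det[of "inverse \<rho> ^ k" "A \<circ> \<sigma>"]) (use A L d rho_pos in auto)
  thus "\<exists>l\<in>{M. bnd (inverse \<rho> ^ k) M \<and> absv (det M) \<ge> d}. \<exists>r::nat\<Rightarrow>nat. strict_mono r \<and> (\<forall>e>0. \<exists>N. \<forall>n\<ge>N. mdist absv (A (r n)) l < e)"
    using L by blast
qed

end

context nalf
begin

definition nice :: "nat \<Rightarrow> nat \<Rightarrow> ('a mat2 \<Rightarrow> complex) \<Rightarrow> bool" where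
  "nice r s f \<longleftrightarrow> (\<forall>M N. mdist absv M N \<le> \<rho> ^ r \<longrightarrow> f M = f N) \<and>
                   (\<forall>M. f M \<noteq> 0 \<longrightarrow> bnd (inverse \<rho> ^ s) M)"

lemma inv_rho_pow_mono: "k \<le> n \<Longrightarrow> inverse \<rho> ^ k \<le> inverse \<rho> ^ n"
  using rho_pos rho_lt1 by (simp add: one_less_inverse power_increasing)

lemma rho_pow_anti: "k \<le> n \<Longrightarrow> \<rho> ^ n \<le> \<rho> ^ k"
  using rho_pos rho_lt1 by (simp add: power_decreasing)

lemma compact_bnd:
  assumes "compact_M absv K"
  shows "\<exists>k. \<forall>M\<in>K. bnd (inverse \<rho> ^ k) M"
proof (rule ccontr)
  assume "\<not> ?thesis"
  hence "\<forall>k. \<exists>M. M \<in> K \<and> \<not> bnd (inverse \<rho> ^ k) M" by blast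
  hence "\<exists>A. \<forall>k. A k \<in> K \<and> \<not> bnd (inverse \<rho> ^ k) (A k)" by (rule choice)
  then obtain A where A: "\<And>k. A k \<in> K \<and> \<not> bnd (inverse \<rho> ^ k) (A k)" by blast
  have "\<exists>l\<in>K. \<exists>r::nat\<Rightarrow>nat. strict_mono r \<and> (\<forall>e>0. \<exists>N. \<forall>n\<ge>N. mdist absv (A (r n)) l < e)"
    using assms[unfolded compact_M_def, rule_format, of A] A by blast
  then obtain L \<sigma> where L: "L \<in> K" "strict_mono (\<sigma>::nat\<Rightarrow>nat)" "\<forall>e>0. \<exists>N. \<forall>n\<ge>N. mdist absv (A (\<sigma> n)) L < e"
    by blast
  obtain N where N: "\<forall>n\<ge>N. mdist absv (A (\<sigma> n)) L < 1" using L(3) by force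
  define a where "a = max (nrm L) 1"
  have a: "a \<ge> 1" "bnd a L" using bnd_nrm[of L] bnd_mono a_def by auto
  obtain k0 where k0: "a \<le> inverse \<rho> ^ k0" using rho_inv_pow by blast
  define n where "n = max N k0"
  have "mdist absv (A (\<sigma> n)) L < 1" using N n_def by simp
  hence "mdist absv (A (\<sigma> n)) L \<le> a" using a by linarith
  hence "bnd a (A (\<sigma> n))" using bnd_close a by blast
  moreover have "\<sigma> n \<ge> k0" using seq_suble[OF L(2), of n] n_def by simp
  hence "a \<le> inverse \<rho> ^ (\<sigma> n)" using k0 inv_rho_pow_mono[of k0 "\<sigma> n"] by linarith
  ultimately have "bnd (inverse \<rho> ^ (\<sigma> n)) (A (\<sigma> n))" using bnd_mono by blast
  thus False using A by blast
qed

lemma GL2_open: "L \<in> GL2 \<Longrightarrow> \<exists>\<delta>>0. \<forall>N. mdist absv N L < \<delta> \<longrightarrow> N \<in> GL2"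
proof -
  assume "L \<in> GL2"
  hence "det L \<noteq> 0" unfolding GL2_def by simp
  then obtain d where "d > 0" "\<forall>N. mdist absv N L < d \<longrightarrow> absv (det N) = absv (det L)" using det_locconst by blast
  moreover have "absv (det L) \<noteq> 0" using \<open>det L \<noteq> 0\<close> by simp
  ultimately show ?thesis unfolding GL2_def by (intro exI[of _ d]) auto
qed

lemma Sch_nice:
  assumes f: "f \<in> Sch absv X" and op: "\<forall>L\<in>X. \<exists>\<delta>>0. \<forall>N. mdist absv N L < \<delta> \<longrightarrow> N \<in> X"
  shows "\<exists>r s. nice r s f"
proof -
  obtain K where K: "K \<subseteq> X" "compact_M absv K" "{M\<in>X. f M \<noteq> 0} \<subseteq> K"
    using f unfolding Sch_def by blast
  have off: "\<And>M. M \<notin> X \<Longrightarrow> f M = 0" using f unfolding Sch_def by blast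
  have lc: "\<forall>M\<in>X. \<exists>r>0. \<forall>N\<in>X. mdist absv N M < r \<longrightarrow> f N = f M" using f unfolding Sch_def by blast
  have inK: "f M \<noteq> 0 \<Longrightarrow> M \<in> K" for M using off K(3) by blast
  obtain s where s: "\<forall>M\<in>K. bnd (inverse \<rho> ^ s) M" using compact_bnd[OF K(2)] by blast
  have "\<exists>r. \<forall>M N. mdist absv M N \<le> \<rho> ^ r \<longrightarrow> f M = f N"
  proof (rule ccontr)
    assume "\<not> ?thesis"
    hence "\<forall>r. \<exists>M N. mdist absv M N \<le> \<rho> ^ r \<and> f M \<noteq> f N" by blast
    hence "\<forall>r. \<exists>P. mdist absv (fst P) (snd P) \<le> \<rho> ^ r \<and> f (fst P) \<noteq> f (snd P)" by simp
    hence "\<exists>P. \<forall>r. mdist absv (fst (P r)) (snd (P r)) \<le> \<rho> ^ r \<and> f (fst (P r)) \<noteq> f (snd (P r))" by (rule choice)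
    then obtain P where P: "\<forall>r. mdist absv (fst (P r)) (snd (P r)) \<le> \<rho> ^ r \<and> f (fst (P r)) \<noteq> f (snd (P r))" by blast
    define A where "A r = fst (P r)" for r
    define B where "B r = snd (P r)" for r
    have AB: "\<And>r. mdist absv (A r) (B r) \<le> \<rho> ^ r \<and> f (A r) \<noteq> f (B r)" using P A_def B_def by simp
    define A' where "A' r = (if f (A r) \<noteq> 0 then A r else B r)" for r
    define B' where "B' r = (if f (A r) \<noteq> 0 then B r else A r)" for r
    have AB': "mdist absv (A' r) (B' r) \<le> \<rho> ^ r" "f (A' r) \<noteq> f (B' r)" "f (A' r) \<noteq> 0" for r
      using AB[of r] mdist_sym[of "A r" "B r"] unfolding A'_def B'_def by auto
    have "A' r \<in> K" for r using inK AB'(3) by blast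
    hence "\<exists>l\<in>K. \<exists>r::nat\<Rightarrow>nat. strict_mono r \<and> (\<forall>e>0. \<exists>N. \<forall>n\<ge>N. mdist absv (A' (r n)) l < e)"
      using K(2)[unfolded compact_M_def, rule_format, of A'] by blast
    then obtain L \<sigma> where L: "L \<in> K" "strict_mono (\<sigma>::nat\<Rightarrow>nat)" "\<forall>e>0. \<exists>N. \<forall>n\<ge>N. mdist absv (A' (\<sigma> n)) L < e"
      by blast
    have LX: "L \<in> X" using L K by blast
    obtain d1 where d1: "d1 > 0" "\<forall>N\<in>X. mdist absv N L < d1 \<longrightarrow> f N = f L" using lc LX by blast
    obtain d2 where d2: "d2 > 0" "\<forall>N. mdist absv N L < d2 \<longrightarrow> N \<in> X" using op LX by blast
    define d where "d = min d1 d2"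
    have d: "d > 0" using d1 d2 d_def by simp
    obtain N where N: "\<forall>n\<ge>N. mdist absv (A' (\<sigma> n)) L < d" using L(3) d by blast
    obtain R where R: "\<rho> ^ R < d" using rho_pow_small d by blast
    define n where "n = max N R"
    have "\<sigma> n \<ge> R" using seq_suble[OF L(2), of n] n_def by simp
    hence "\<rho> ^ (\<sigma> n) < d" using R rho_pow_anti[of R "\<sigma> n"] by linarith
    hence "mdist absv (B' (\<sigma> n)) (A' (\<sigma> n)) < d" using AB'(1)[of "\<sigma> n"] mdist_sym[of "B' (\<sigma> n)" "A' (\<sigma> n)"] by linarith
    moreover have "mdist absv (A' (\<sigma> n)) L < d" using N n_def by simp
    ultimately have "mdist absv (B' (\<sigma> n)) L < d" by (rule mdist_trans_lt)
    hence "f (B' (\<sigma> n)) = f L" using d1 d2 d_def by auto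
    moreover have "f (A' (\<sigma> n)) = f L" using \<open>mdist absv (A' (\<sigma> n)) L < d\<close> d1 d2 d_def by auto
    ultimately show False using AB'(2)[of "\<sigma> n"] by simp
  qed
  then obtain r where "\<forall>M N. mdist absv M N \<le> \<rho> ^ r \<longrightarrow> f M = f N" by blast
  moreover have "\<forall>M. f M \<noteq> 0 \<longrightarrow> bnd (inverse \<rho> ^ s) M" using s inK by blast
  ultimately show ?thesis unfolding nice_def by blast
qed

lemma SchU_nice: "f \<in> Sch absv UNIV \<Longrightarrow> \<exists>r s. nice r s f"
  by (rule Sch_nice) (auto intro: exI[of _ 1])

lemma SchG_nice: "f \<in> Sch absv GL2 \<Longrightarrow> \<exists>r s. nice r s f"
  by (rule Sch_nice) (use GL2_open in auto)

lemma SchG_det: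
  assumes f: "f \<in> Sch absv GL2"
  shows "\<exists>c>0. \<forall>M. f M \<noteq> 0 \<longrightarrow> absv (det M) \<ge> c"
proof (rule ccontr)
  assume neg: "\<not> ?thesis"
  obtain K where K: "K \<subseteq> GL2" "compact_M absv K" "{M\<in>GL2. f M \<noteq> 0} \<subseteq> K"
    using f unfolding Sch_def by blast
  have off: "\<And>M. M \<notin> GL2 \<Longrightarrow> f M = 0" using f unfolding Sch_def by blast
  have "\<forall>n. \<exists>M. f M \<noteq> 0 \<and> absv (det M) < \<rho> ^ n"
  proof
    fix n :: nat
    have "\<rho> ^ n > 0" using rho_pos by simp
    thus "\<exists>M. f M \<noteq> 0 \<and> absv (det M) < \<rho> ^ n" using neg by (auto simp: not_le)
  qed
  hence "\<exists>A. \<forall>n. f (A n) \<noteq> 0 \<and> absv (det (A n)) < \<rho> ^ n" by (rule choice)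
  then obtain A where A: "\<And>n. f (A n) \<noteq> 0 \<and> absv (det (A n)) < \<rho> ^ n" by blast
  have "A n \<in> K" for n using A off K(3) by blast
  hence "\<exists>l\<in>K. \<exists>r::nat\<Rightarrow>nat. strict_mono r \<and> (\<forall>e>0. \<exists>N. \<forall>n\<ge>N. mdist absv (A (r n)) l < e)"
    using K(2)[unfolded compact_M_def, rule_format, of A] by blast
  then obtain L \<sigma> where L: "L \<in> K" "strict_mono (\<sigma>::nat\<Rightarrow>nat)" "\<forall>e>0. \<exists>N. \<forall>n\<ge>N. mdist absv (A (\<sigma> n)) L < e"
    by blast
  have "det L \<noteq> 0" using L K unfolding GL2_def by blast
  then obtain d where d: "d > 0" "\<forall>N. mdist absv N L < d \<longrightarrow> absv (det N) = absv (det L)"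
    using det_locconst by blast
  obtain N where N: "\<forall>n\<ge>N. mdist absv (A (\<sigma> n)) L < d" using L(3) d by blast
  have "absv (det L) > 0" using \<open>det L \<noteq> 0\<close> by simp
  then obtain R where R: "\<rho> ^ R < absv (det L)" using rho_pow_small by blast
  define n where "n = max N R"
  have "\<sigma> n \<ge> R" using seq_suble[OF L(2), of n] n_def by simp
  hence "\<rho> ^ (\<sigma> n) < absv (det L)" using R rho_pow_anti[of R "\<sigma> n"] by linarith
  moreover have "absv (det (A (\<sigma> n))) = absv (det L)" using N d n_def by simp
  ultimately show False using A[of "\<sigma> n"] by simp
qed

lemma nice_SchU: "nice r s f \<Longrightarrow> f \<in> Sch absv UNIV"
  unfolding Sch_def
proof (intro CollectI conjI)
  assume n: "nice r s f"
  show "\<forall>M. M \<notin> UNIV \<longrightarrow> f M = 0" by simp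
  show "\<forall>M\<in>UNIV. \<exists>ra>0. \<forall>N\<in>UNIV. mdist absv N M < ra \<longrightarrow> f N = f M"
    using n rho_pos unfolding nice_def by (intro ballI exI[of _ "\<rho> ^ r"]) auto
  show "\<exists>K\<subseteq>UNIV. compact_M absv K \<and> {M \<in> UNIV. f M \<noteq> 0} \<subseteq> K"
    using n compact_ball[of s] unfolding nice_def by (intro exI[of _ "{M. bnd (inverse \<rho> ^ s) M}"]) auto
qed

lemma nice_SchG: "nice r s f \<Longrightarrow> c > 0 \<Longrightarrow> (\<And>M. f M \<noteq> 0 \<Longrightarrow> absv (det M) \<ge> c) \<Longrightarrow> f \<in> Sch absv GL2"
  unfolding Sch_def
proof (intro CollectI conjI)
  assume n: "nice r s f" and c: "c > 0" and dc: "\<And>M. f M \<noteq> 0 \<Longrightarrow> absv (det M) \<ge> c"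
  show "\<forall>M. M \<notin> GL2 \<longrightarrow> f M = 0" using dc c unfolding GL2_def by fastforce
  show "\<forall>M\<in>GL2. \<exists>ra>0. \<forall>N\<in>GL2. mdist absv N M < ra \<longrightarrow> f N = f M"
    using n rho_pos unfolding nice_def by (intro ballI exI[of _ "\<rho> ^ r"]) auto
  have "{M. bnd (inverse \<rho> ^ s) M \<and> absv (det M) \<ge> c} \<subseteq> GL2" using c unfolding GL2_def by auto
  moreover have "{M \<in> GL2. f M \<noteq> 0} \<subseteq> {M. bnd (inverse \<rho> ^ s) M \<and> absv (det M) \<ge> c}"
    using n dc unfolding nice_def by auto
  ultimately show "\<exists>K\<subseteq>GL2. compact_M absv K \<and> {M \<in> GL2. f M \<noteq> 0} \<subseteq> K"
    using compact_ball_det[OF c, of s] by blast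
qed

lemma nice_translate:
  assumes n: "nice r s f" and g: "det g \<noteq> 0"
  shows "\<exists>r' s'. nice r' s' (\<lambda>M. f (g ** M))"
proof -
  have np: "nrm g + 1 > 0" using nrm_nonneg[of g] by linarith
  obtain r' where r': "\<rho> ^ r' < \<rho> ^ r / (nrm g + 1)" using rho_pow_small[of "\<rho> ^ r / (nrm g + 1)"] rho_pos np by auto
  obtain s' where s': "nrm (inv2 g) * inverse \<rho> ^ s \<le> inverse \<rho> ^ s'" using rho_inv_pow by blast
  have "f (g ** M) = f (g ** N)" if "mdist absv M N \<le> \<rho> ^ r'" for M N
  proof -
    have "mdist absv (g ** M) (g ** N) \<le> nrm g * mdist absv M N" by (rule mdist_mult_left)
    also have "\<dots> \<le> (nrm g + 1) * \<rho> ^ r'" using that nrm_nonneg[of g] mdist_nonneg[of M N]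
      by (intro mult_mono) auto
    also have "\<dots> \<le> \<rho> ^ r" using r' np by (simp add: pos_less_divide_eq mult.commute)
    finally show ?thesis using n unfolding nice_def by blast
  qed
  moreover have "bnd (inverse \<rho> ^ s') M" if "f (g ** M) \<noteq> 0" for M
  proof -
    have "bnd (inverse \<rho> ^ s) (g ** M)" using n that unfolding nice_def by blast
    hence "bnd (nrm (inv2 g) * inverse \<rho> ^ s) (inv2 g ** (g ** M))"
      using bnd_mult[OF bnd_nrm] nrm_nonneg by blast
    thus ?thesis using inv2_cancel[OF g, of M] s' bnd_mono by simp
  qed
  ultimately show ?thesis unfolding nice_def by blast
qed

end

context nalf
begin

lemma mm_diff_left: "(A::'a mat2) ** ((B::'a mat2) - C) = A ** B - A ** C"
  unfolding mat2_eq by (simp add: mult_entry algebra_simps)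
lemma mm_diff_right: "((A::'a mat2) - B) ** (C::'a mat2) = A ** C - B ** C"
  unfolding mat2_eq by (simp add: mult_entry algebra_simps)
lemma mm_add_right: "((A::'a mat2) + B) ** (C::'a mat2) = A ** C + B ** C"
  unfolding mat2_eq by (simp add: mult_entry algebra_simps)
lemma bnd_uminus: "bnd e (- X) \<longleftrightarrow> bnd e X" unfolding bnd_def by simp

definition K0 :: "'a mat2 set" where "K0 = {k. bnd 1 k \<and> absv (det k) = 1}"
definition Kr :: "nat \<Rightarrow> 'a mat2 set" where "Kr r = {k. bnd 1 k \<and> bnd (\<rho> ^ r) (k - mat 1)}"

lemma bnd_1_mat1: "bnd 1 (mat 1 :: 'a mat2)" by (simp add: bnd_iff)

lemma K0_det: "k \<in> K0 \<Longrightarrow> det k \<noteq> 0"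
proof
  assume "k \<in> K0" "det k = 0"
  thus False unfolding K0_def by simp
qed

lemma K0_mult: "k \<in> K0 \<Longrightarrow> w \<in> K0 \<Longrightarrow> k ** w \<in> K0"
  unfolding K0_def using bnd_mult[of 1 k 1 w] by (simp add: det_mul av_mult)

lemma bnd_inv2: "bnd 1 k \<Longrightarrow> absv (det k) = 1 \<Longrightarrow> bnd 1 (inv2 k)"
  unfolding bnd_iff inv2_def by (simp add: av_divide)

lemma K0_inv: "k \<in> K0 \<Longrightarrow> inv2 k \<in> K0"
proof -
  assume k: "k \<in> K0"
  hence "det k \<noteq> 0" by (rule K0_det)
  thus ?thesis using k unfolding K0_def using bnd_inv2 det_inv2[OF \<open>det k \<noteq> 0\<close>] by (simp add: av_inverse)
qed

lemma rpow_le1: "\<rho> ^ r \<le> 1" using rho_pos rho_lt1 by (simp add: power_le_one)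

lemma Kr_det: assumes "r \<ge> 1" "k \<in> Kr r" shows "absv (det k) = 1"
proof -
  have "absv (det k - det (mat 1 :: 'a mat2)) \<le> 1 * \<rho> ^ r"
    using det_diff_bnd[of 1 k "mat 1" "\<rho> ^ r"] assms bnd_1_mat1 mdist_bnd rho_pos unfolding Kr_def by simp
  moreover have "\<rho> ^ r < 1" using assms rho_pos rho_lt1 by (simp add: power_less_one_iff)
  ultimately have "absv (det k - 1) < absv 1" by (simp add: det_2)
  hence "absv (det k) = absv 1" by (rule av_close_eq)
  thus ?thesis by simp
qed

lemma Kr_K0: "r \<ge> 1 \<Longrightarrow> k \<in> Kr r \<Longrightarrow> k \<in> K0"
  using Kr_det unfolding K0_def Kr_def by auto

lemma Kr_mult: assumes "k \<in> Kr r" "w \<in> Kr r" shows "k ** w \<in> Kr r"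
proof -
  have eq: "k ** w - mat 1 = (k - mat 1) ** w + (w - mat 1)"
    by (simp add: mat2_eq mult_entry algebra_simps)
  have "bnd (\<rho> ^ r * 1) ((k - mat 1) ** w)" using assms unfolding Kr_def
    by (intro bnd_mult) (auto simp: rho_pos less_imp_le)
  hence "bnd (\<rho> ^ r) ((k - mat 1) ** w + (w - mat 1))" using assms unfolding Kr_def by (simp add: bnd_add)
  hence "bnd (\<rho> ^ r) (k ** w - mat 1)" by (simp only: eq)
  thus ?thesis using assms bnd_mult[of 1 k 1 w] unfolding Kr_def by simp
qed

lemma Kr_inv: assumes "r \<ge> 1" "k \<in> Kr r" shows "inv2 k \<in> Kr r"
proof -
  have d: "absv (det k) = 1" using Kr_det assms by blast
  hence dn: "det k \<noteq> 0" by auto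
  have b: "bnd 1 (inv2 k)" using bnd_inv2 d assms unfolding Kr_def by blast
  have "inv2 k - mat 1 = inv2 k ** (mat 1 - k)"
    using inv2_left[OF dn] by (simp add: mm_diff_left)
  moreover have "bnd (1 * \<rho> ^ r) (inv2 k ** (mat 1 - k))"
  proof (rule bnd_mult[OF b])
    have "mat 1 - k = - (k - mat 1)" by simp
    thus "bnd (\<rho> ^ r) (mat 1 - k)" using assms bnd_uminus[of "\<rho> ^ r" "k - mat 1"] unfolding Kr_def by simp
  qed simp
  ultimately show ?thesis using b unfolding Kr_def by simp
qed

definition Rep :: "nat \<Rightarrow> 'a mat2 set" where
  "Rep r = {k \<in> K0. \<forall>i j. k$i$j \<in> Rb r}"

lemma Rep_finite: "finite (Rep r)"
proof -
  have "Rep r \<subseteq> (\<lambda>(a,b,c,d). mk a b c d) ` (Rb r \<times> Rb r \<times> Rb r \<times> Rb r)"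
  proof
    fix k assume "k \<in> Rep r"
    hence "k = mk (k$1$1) (k$1$2) (k$2$1) (k$2$2)" "k$1$1 \<in> Rb r" "k$1$2 \<in> Rb r" "k$2$1 \<in> Rb r" "k$2$2 \<in> Rb r"
      unfolding Rep_def by (auto simp: mat2_eq)
    thus "k \<in> (\<lambda>(a,b,c,d). mk a b c d) ` (Rb r \<times> Rb r \<times> Rb r \<times> Rb r)" by (auto simp: image_iff)
  qed
  moreover have "finite (Rb r \<times> Rb r \<times> Rb r \<times> Rb r)" using Rb_finite by simp
  ultimately show ?thesis using finite_subset by blast
qed

lemma Rep_ex:
  assumes "r \<ge> 1" "k' \<in> K0"
  shows "\<exists>k\<in>Rep r. inv2 k ** k' \<in> Kr r"
proof -
  have "\<forall>i j. \<exists>c. c \<in> Rb r \<and> absv (k'$i$j - c) \<le> \<rho> ^ r"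
    using Rb_ex assms unfolding K0_def bnd_def by blast
  hence "\<forall>i. \<exists>Ci. \<forall>j. Ci j \<in> Rb r \<and> absv (k'$i$j - Ci j) \<le> \<rho> ^ r" by (intro allI choice) blast
  hence "\<exists>C. \<forall>i j. C i j \<in> Rb r \<and> absv (k'$i$j - C i j) \<le> \<rho> ^ r" by (rule choice)
  then obtain C where C: "\<And>i j. C i j \<in> Rb r \<and> absv (k'$i$j - C i j) \<le> \<rho> ^ r" by blast
  define k :: "'a mat2" where "k = (\<chi> i j. C i j)"
  have "\<forall>i j. absv (C i j) \<le> 1" using C Rb_O by blast
  hence bk: "bnd 1 k" unfolding k_def bnd_def by simp
  have kk: "bnd (\<rho> ^ r) (k' - k)" using C unfolding k_def bnd_def by simp
  have "absv (det k' - det k) \<le> 1 * \<rho> ^ r"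
    using det_diff_bnd[of 1 k' k "\<rho> ^ r"] assms bk kk mdist_bnd rho_pos unfolding K0_def by simp
  moreover have "\<rho> ^ r < 1" using assms rho_pos rho_lt1 by (simp add: power_less_one_iff)
  ultimately have "absv (det k - det k') < absv (det k')" using assms unfolding K0_def by (simp add: av_sym)
  hence "absv (det k) = absv (det k')" by (rule av_close_eq)
  hence dk: "absv (det k) = 1" using assms unfolding K0_def by simp
  hence kR: "k \<in> Rep r" using bk C unfolding Rep_def K0_def k_def by simp
  have dn: "det k \<noteq> 0" using dk by auto
  have bi: "bnd 1 (inv2 k)" using bnd_inv2 bk dk by blast
  have "inv2 k ** k' - mat 1 = inv2 k ** (k' - k)"
    using inv2_left[OF dn] by (simp add: mm_diff_left)
  moreover have "bnd (1 * \<rho> ^ r) (inv2 k ** (k' - k))" using bnd_mult[OF bi kk] by simp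
  moreover have "bnd 1 (inv2 k ** k')" using bnd_mult[OF bi, of 1 k'] assms unfolding K0_def by simp
  ultimately have "inv2 k ** k' \<in> Kr r" unfolding Kr_def by simp
  thus ?thesis using kR by blast
qed

lemma Rep_uniq:
  assumes "k \<in> Rep r" "k' \<in> Rep r" "inv2 k' ** k \<in> Kr r"
  shows "k = k'"
proof -
  have dk': "det k' \<noteq> 0" using assms K0_det unfolding Rep_def by blast
  have "k - k' = k' ** (inv2 k' ** k - mat 1)"
    using inv2_right[OF dk'] by (simp add: mm_diff_left matrix_mul_assoc)
  moreover have "bnd (1 * \<rho> ^ r) (k' ** (inv2 k' ** k - mat 1))"
    using assms bnd_mult[of 1 k' "\<rho> ^ r"] unfolding Rep_def K0_def Kr_def by simp
  ultimately have "bnd (\<rho> ^ r) (k - k')" by simp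
  have "k$i$j = k'$i$j" for i j
  proof -
    have "absv (k$i$j - k'$i$j) \<le> \<rho> ^ r" using \<open>bnd (\<rho> ^ r) (k - k')\<close> unfolding bnd_def by simp
    moreover have "k$i$j \<in> Rb r" "k'$i$j \<in> Rb r" using assms unfolding Rep_def by auto
    ultimately show ?thesis using Rb_uniq by blast
  qed
  thus ?thesis by (simp add: vec_eq_iff)
qed

definition H :: "nat \<Rightarrow> nat \<Rightarrow> 'a \<Rightarrow> 'a mat2" where
  "H n a c = mk (pp ^ a) 0 c (pp ^ (n - a))"

lemma H_bnd: "c \<in> Rb b \<Longrightarrow> bnd 1 (H n a c)"
  unfolding H_def bnd_iff using Rb_O rho_pos rho_lt1 by (simp add: av_power power_le_one)

lemma H_det: "a \<le> n \<Longrightarrow> det (H n a c) = pp ^ n"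
  unfolding H_def det_mk by (simp add: power_add[symmetric])

lemma H_uniq:
  assumes "a \<le> n" "a' \<le> n" "c \<in> Rb (n - a)" "c' \<in> Rb (n - a')" "w \<in> K0" "H n a' c' = H n a c ** w"
  shows "a = a' \<and> c = c'"
proof -
  have e: "pp ^ a' = pp ^ a * w$1$1" "0 = pp ^ a * w$1$2" "c' = c * w$1$1 + pp ^ (n-a) * w$2$1"
     "pp ^ (n-a') = c * w$1$2 + pp ^ (n-a) * w$2$2"
    using assms(6) unfolding H_def mat2_eq mult_entry by simp_all
  have w12: "w$1$2 = 0" using e(2) by simp
  have "absv (det w) = 1" using assms(5) unfolding K0_def by simp
  hence "absv (w$1$1) * absv (w$2$2) = 1" unfolding det_2 using w12 by (simp add: av_mult)
  moreover have "absv (w$1$1) \<le> 1" "absv (w$2$2) \<le> 1" using assms(5) unfolding K0_def bnd_def by auto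
  ultimately have w11: "absv (w$1$1) = 1"
  proof -
    assume p: "absv (w$1$1) * absv (w$2$2) = 1" "absv (w$1$1) \<le> 1" "absv (w$2$2) \<le> 1"
    have "absv (w$1$1) * absv (w$2$2) \<le> absv (w$1$1)" using p(3) by (simp add: mult_right_le_one_le)
    thus ?thesis using p(1,2) by linarith
  qed
  have "absv (pp ^ a') = absv (pp ^ a * w$1$1)" using e(1) by simp
  hence "\<rho> ^ a' = \<rho> ^ a" using w11 by (simp add: av_mult av_power)
  hence "\<rho> powi (int a') = \<rho> powi (int a)" by simp
  hence "int a' = int a" using rho_powi_inj by blast
  hence aa: "a = a'" by simp
  hence "w$1$1 = 1" using e(1) by simp
  hence "c' - c = pp ^ (n-a) * w$2$1" using e(3) by simp
  hence "absv (c' - c) \<le> \<rho> ^ (n-a)" using assms(5) unfolding K0_def bnd_def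
    by (simp add: av_mult av_power mult_le_cancel_left1 rho_pos)
  hence "c' = c" using Rb_uniq assms aa by blast
  thus ?thesis using aa by simp
qed

lemma herm_low:
  assumes "absv x \<le> 1" "absv y \<le> 1" "absv z \<le> 1" "absv (x*z) = \<rho> ^ n"
  shows "\<exists>a c w. a \<le> n \<and> c \<in> Rb (n-a) \<and> w \<in> K0 \<and> mk x 0 y z ** w = H n a c"
proof -
  have xz: "x \<noteq> 0" "z \<noteq> 0" using assms(4) rho_pos by auto
  obtain a where a: "absv x = \<rho> ^ a" using disc_le1 xz assms by blast
  obtain b where b: "absv z = \<rho> ^ b" using disc_le1 xz assms by blast
  have "\<rho> ^ (a + b) = \<rho> ^ n" using assms(4) a b by (simp add: av_mult power_add)
  hence "\<rho> powi (int (a + b)) = \<rho> powi (int n)" by (simp only: power_int_of_nat)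
  hence "int (a + b) = int n" using rho_powi_inj by blast
  hence ab: "a + b = n" by simp
  define u where "u = pp ^ a / x"
  define v where "v = pp ^ b / z"
  have u: "absv u = 1" unfolding u_def using a rho_pos by (simp add: av_divide av_power)
  have v: "absv v = 1" unfolding v_def using b rho_pos by (simp add: av_divide av_power)
  define y' where "y' = y * u"
  have y': "absv y' \<le> 1" unfolding y'_def using u assms by (simp add: av_mult)
  obtain c where c: "c \<in> Rb b" "absv (y' - c) \<le> \<rho> ^ b" using Rb_ex[OF y'] by blast
  define t where "t = (c - y') / pp ^ b"
  have t: "absv t \<le> 1" unfolding t_def using c rho_pos by (simp add: av_divide av_power av_sym)
  define w where "w = mk u 0 (v * t) v"
  have "w \<in> K0" unfolding K0_def w_def using u v t by (simp add: bnd_iff det_mk av_mult)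
  moreover have "mk x 0 y z ** w = H n a c"
  proof -
    have "x * u = pp ^ a" unfolding u_def using xz by simp
    moreover have "z * v = pp ^ b" unfolding v_def using xz by simp
    moreover have "y * u + z * (v * t) = c"
    proof -
      have "z * (v * t) = (z * v) * t" by (simp only: mult.assoc)
      also have "\<dots> = pp ^ b * ((c - y') / pp ^ b)" using \<open>z * v = pp ^ b\<close> t_def by simp
      also have "\<dots> = c - y'" by simp
      finally show ?thesis unfolding y'_def by simp
    qed
    moreover have "b = n - a" using ab by simp
    ultimately show ?thesis unfolding w_def H_def mat2_eq mult_entry by simp
  qed
  ultimately show ?thesis using ab c by (intro exI[of _ a] exI[of _ c] exI[of _ w]) auto
qed

lemma herm1:
  assumes "bnd 1 M" "absv (det M) = \<rho> ^ n" "absv (M$1$2) \<le> absv (M$1$1)"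
  shows "\<exists>a c w. a \<le> n \<and> c \<in> Rb (n-a) \<and> w \<in> K0 \<and> M ** w = H n a c"
proof -
  have m11: "M$1$1 \<noteq> 0"
  proof
    assume "M$1$1 = 0"
    hence "absv (M$1$2) \<le> 0" using assms(3) by simp
    hence "M$1$2 = 0" using av_nonneg[of "M$1$2"] av_zero_iff[of "M$1$2"] by linarith
    hence "det M = 0" using \<open>M$1$1 = 0\<close> by (simp add: det_2)
    thus False using assms(2) rho_pos by simp
  qed
  define e where "e = - M$1$2 / M$1$1"
  have e: "absv e \<le> 1" unfolding e_def using assms(3) m11 by (simp add: av_divide divide_le_eq_1)
  define w1 where "w1 = mk 1 e 0 1"
  have w1: "w1 \<in> K0" unfolding K0_def w1_def using e by (simp add: bnd_iff det_mk)
  define z where "z = M$2$2 + M$2$1 * e"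
  have "M ** w1 = mk (M$1$1) 0 (M$2$1) z"
    unfolding w1_def mat2_eq mult_entry z_def e_def using m11 by simp
  moreover have bz: "absv z \<le> 1"
    unfolding z_def using assms(1) e unfolding bnd_iff by (intro av_add_le) (auto simp: av_mult mult_le_one)
  moreover have "det (M ** w1) = det M" using w1 unfolding w1_def by (simp add: det_mul det_mk)
  ultimately have "absv (M$1$1 * z) = \<rho> ^ n" using assms(2) by (simp add: det_mk)
  then obtain a c w where h: "a \<le> n" "c \<in> Rb (n-a)" "w \<in> K0" "mk (M$1$1) 0 (M$2$1) z ** w = H n a c"
    using herm_low[of "M$1$1" "M$2$1" z n] assms(1) bz unfolding bnd_iff by blast
  have "M ** (w1 ** w) = H n a c" using h(4) \<open>M ** w1 = mk (M$1$1) 0 (M$2$1) z\<close> by (simp add: matrix_mul_assoc)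
  moreover have "w1 ** w \<in> K0" using K0_mult w1 h(3) by blast
  ultimately show ?thesis using h by blast
qed

lemma herm:
  assumes "bnd 1 M" "absv (det M) = \<rho> ^ n"
  shows "\<exists>a c w. a \<le> n \<and> c \<in> Rb (n-a) \<and> w \<in> K0 \<and> M ** w = H n a c"
proof (cases "absv (M$1$2) \<le> absv (M$1$1)")
  case True thus ?thesis using herm1 assms by blast
next
  case False
  define sw :: "'a mat2" where "sw = mk 0 1 1 0"
  have sw: "sw \<in> K0" unfolding K0_def sw_def by (simp add: bnd_iff det_mk)
  have M': "(M ** sw)$1$1 = M$1$2" "(M ** sw)$1$2 = M$1$1" unfolding sw_def mult_entry by simp_all
  have "bnd 1 (M ** sw)" using bnd_mult[OF assms(1), of 1 sw] sw unfolding K0_def by simp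
  moreover have "absv (det (M ** sw)) = \<rho> ^ n" using assms(2) sw unfolding K0_def by (simp add: det_mul av_mult)
  moreover have "absv ((M ** sw)$1$2) \<le> absv ((M ** sw)$1$1)" using False M' by simp
  ultimately obtain a c w where h: "a \<le> n" "c \<in> Rb (n-a)" "w \<in> K0" "(M ** sw) ** w = H n a c"
    using herm1 by blast
  hence "M ** (sw ** w) = H n a c" by (simp add: matrix_mul_assoc)
  moreover have "sw ** w \<in> K0" using K0_mult sw h(3) by blast
  ultimately show ?thesis using h by blast
qed

end

context nalf
begin

lemma nice_mono: "nice r s f \<Longrightarrow> r \<le> r' \<Longrightarrow> s \<le> s' \<Longrightarrow> nice r' s' f"
proof -
  assume a: "nice r s f" "r \<le> r'" "s \<le> s'"
  have "\<rho> ^ r' \<le> \<rho> ^ r" using rho_pow_anti a by blast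
  moreover have "inverse \<rho> ^ s \<le> inverse \<rho> ^ s'" using inv_rho_pow_mono a by blast
  ultimately show ?thesis using a(1) bnd_mono unfolding nice_def by (meson order_trans)
qed

definition goodG :: "('a mat2 \<Rightarrow> complex) \<Rightarrow> bool" where
  "goodG f \<longleftrightarrow> (\<exists>r s c. nice r s f \<and> c > 0 \<and> (\<forall>M. f M \<noteq> 0 \<longrightarrow> c \<le> absv (det M)))"

lemma goodG_Sch: "goodG f \<Longrightarrow> f \<in> Sch absv GL2"
  unfolding goodG_def using nice_SchG by blast

lemma goodG_zero: "goodG (\<lambda>M. 0)"
  unfolding goodG_def nice_def by (rule exI[of _ 0], rule exI[of _ 0], rule exI[of _ 1]) simp

lemma goodG_add: assumes "goodG f" "goodG h" shows "goodG (\<lambda>M. f M + h M)"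
proof -
  obtain r s c where f: "nice r s f" "c > 0" "\<forall>M. f M \<noteq> 0 \<longrightarrow> c \<le> absv (det M)" using assms unfolding goodG_def by blast
  obtain r' s' c' where h: "nice r' s' h" "c' > 0" "\<forall>M. h M \<noteq> 0 \<longrightarrow> c' \<le> absv (det M)" using assms unfolding goodG_def by blast
  have f': "nice (max r r') (max s s') f" using nice_mono[OF f(1)] by simp
  have h': "nice (max r r') (max s s') h" using nice_mono[OF h(1)] by simp
  have "\<forall>M. f M + h M \<noteq> 0 \<longrightarrow> bnd (inverse \<rho> ^ max s s') M"
  proof (intro allI impI)
    fix M assume "f M + h M \<noteq> 0"
    hence "f M \<noteq> 0 \<or> h M \<noteq> 0" by auto
    thus "bnd (inverse \<rho> ^ max s s') M" using f' h' unfolding nice_def by blast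
  qed
  hence "nice (max r r') (max s s') (\<lambda>M. f M + h M)"
    using f' h' unfolding nice_def by auto
  moreover have "\<forall>M. f M + h M \<noteq> 0 \<longrightarrow> min c c' \<le> absv (det M)"
  proof (intro allI impI)
    fix M assume "f M + h M \<noteq> 0"
    hence "f M \<noteq> 0 \<or> h M \<noteq> 0" by auto
    thus "min c c' \<le> absv (det M)" using f(3) h(3) by (meson min.coboundedI1 min.coboundedI2 order_trans)
  qed
  ultimately show ?thesis unfolding goodG_def using f h by (intro exI[of _ "max r r'"] exI[of _ "max s s'"] exI[of _ "min c c'"]) auto
qed

lemma goodG_scale: assumes "goodG f" shows "goodG (\<lambda>M. a * f M)"
proof -
  obtain r s c where f: "nice r s f" "c > 0" "\<forall>M. f M \<noteq> 0 \<longrightarrow> c \<le> absv (det M)" using assms unfolding goodG_def by blast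
  have "nice r s (\<lambda>M. a * f M)" using f(1) unfolding nice_def by auto
  thus ?thesis unfolding goodG_def using f by (intro exI[of _ r] exI[of _ s] exI[of _ c]) auto
qed

lemma goodG_sum: "finite I \<Longrightarrow> (\<And>t. t \<in> I \<Longrightarrow> goodG (\<phi> t)) \<Longrightarrow> goodG (\<lambda>M. \<Sum>t\<in>I. \<phi> t M)"
proof (induction I rule: finite_induct)
  case empty thus ?case using goodG_zero by simp
next
  case (insert a I)
  thus ?case using goodG_add[of "\<phi> a" "\<lambda>M. \<Sum>t\<in>I. \<phi> t M"] by simp
qed

lemma goodG_translate: assumes "goodG f" "det g \<noteq> 0" shows "goodG (\<lambda>M. f (g ** M))"
proof -
  obtain r s c where f: "nice r s f" "c > 0" "\<forall>M. f M \<noteq> 0 \<longrightarrow> c \<le> absv (det M)" using assms unfolding goodG_def by blast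
  obtain r' s' where n: "nice r' s' (\<lambda>M. f (g ** M))" using nice_translate f(1) assms(2) by blast
  have dg: "absv (det g) > 0" using assms by simp
  have "c / absv (det g) \<le> absv (det M)" if "f (g ** M) \<noteq> 0" for M
  proof -
    have "c \<le> absv (det (g ** M))" using f(3) that by blast
    hence "c \<le> absv (det g) * absv (det M)" by (simp add: det_mul av_mult)
    thus ?thesis using dg by (simp add: divide_le_eq mult.commute)
  qed
  thus ?thesis unfolding goodG_def using n f dg by (intro exI[of _ r'] exI[of _ s'] exI[of _ "c / absv (det g)"]) auto
qed

definition ind :: "nat \<Rightarrow> 'a mat2 \<Rightarrow> complex" where
  "ind r M = (if M \<in> Kr r then 1 else 0)"

definition cind :: "nat \<Rightarrow> 'a mat2 \<Rightarrow> 'a mat2 \<Rightarrow> complex" where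
  "cind r g M = ind r (inv2 g ** M)"

lemma Kr_close: assumes "M \<in> Kr r" "mdist absv M N \<le> \<rho> ^ r" shows "N \<in> Kr r"
proof -
  have "mdist absv N M \<le> \<rho> ^ r" using assms(2) mdist_sym[of M N] by simp
  hence "bnd (\<rho> ^ r) (N - M)" using mdist_bnd by blast
  hence b1: "bnd 1 (N - M)" using bnd_mono rpow_le1 by blast
  have "N = (N - M) + M" by simp
  moreover have "bnd 1 M" using assms(1) unfolding Kr_def by simp
  ultimately have bN: "bnd 1 N" using bnd_add[OF b1, of M] by simp
  have "N - mat 1 = (N - M) + (M - mat 1)" by simp
  moreover have "bnd (\<rho> ^ r) (M - mat 1)" using assms(1) unfolding Kr_def by simp
  ultimately have "bnd (\<rho> ^ r) (N - mat 1)" using bnd_add[OF \<open>bnd (\<rho> ^ r) (N - M)\<close>, of "M - mat 1"] by simp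
  thus ?thesis using bN unfolding Kr_def by simp
qed

lemma goodG_ind: assumes "r \<ge> 1" shows "goodG (ind r)"
proof -
  have "nice r 0 (ind r)" unfolding nice_def ind_def
  proof (intro conjI allI impI)
    fix M N assume a: "mdist absv M N \<le> \<rho> ^ r"
    hence "mdist absv M N \<le> \<rho> ^ r" .
    moreover have "mdist absv N M \<le> \<rho> ^ r" using \<open>mdist absv M N \<le> \<rho> ^ r\<close> mdist_sym[of M N] by simp
    ultimately have "M \<in> Kr r \<longleftrightarrow> N \<in> Kr r" using Kr_close by blast
    thus "(if M \<in> Kr r then 1 else 0) = (if N \<in> Kr r then 1 else 0)" by simp
  next
    fix M assume "(if M \<in> Kr r then 1 else 0) \<noteq> (0::complex)"
    thus "bnd (inverse \<rho> ^ 0) M" unfolding Kr_def by (auto split: if_splits)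
  qed
  moreover have "\<forall>M. ind r M \<noteq> 0 \<longrightarrow> 1 \<le> absv (det M)" unfolding ind_def using Kr_det assms
    by (auto split: if_splits)
  ultimately show ?thesis unfolding goodG_def by (intro exI[of _ r] exI[of _ 0] exI[of _ 1]) auto
qed

lemma goodG_cind: assumes "r \<ge> 1" "det g \<noteq> 0" shows "goodG (cind r g)"
proof -
  have "det (inv2 g) \<noteq> 0" using det_inv2[OF assms(2)] assms(2) by simp
  thus ?thesis unfolding cind_def using goodG_translate[OF goodG_ind[OF assms(1)]] by blast
qed

lemma cind_iff: assumes "det g \<noteq> 0" shows "cind r g M = (if \<exists>u\<in>Kr r. M = g ** u then 1 else 0)"
proof -
  have "(inv2 g ** M \<in> Kr r) \<longleftrightarrow> (\<exists>u\<in>Kr r. M = g ** u)"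
  proof
    assume "inv2 g ** M \<in> Kr r"
    moreover have "M = g ** (inv2 g ** M)" using inv2_cancel'[OF assms, of M] by simp
    ultimately show "\<exists>u\<in>Kr r. M = g ** u" by blast
  next
    assume "\<exists>u\<in>Kr r. M = g ** u"
    then obtain u where "u \<in> Kr r" "M = g ** u" by blast
    thus "inv2 g ** M \<in> Kr r" using inv2_cancel[OF assms, of u] by simp
  qed
  thus ?thesis unfolding cind_def ind_def by simp
qed

end

locale haarl = nalf absv for absv :: "'a::field_char_0 \<Rightarrow> real" +
  fixes dg :: "('a mat2 \<Rightarrow> complex) \<Rightarrow> complex"
  assumes haar: "haar absv dg"
begin

lemma dg_add: "f \<in> Sch absv GL2 \<Longrightarrow> h \<in> Sch absv GL2 \<Longrightarrow> dg (\<lambda>M. f M + h M) = dg f + dg h"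
  using haar unfolding haar_def is_dist_def by blast

lemma dg_scale: "f \<in> Sch absv GL2 \<Longrightarrow> dg (\<lambda>M. c * f M) = c * dg f"
  using haar unfolding haar_def is_dist_def by blast

lemma dg_inv: "g \<in> GL2 \<Longrightarrow> f \<in> Sch absv GL2 \<Longrightarrow> dg (\<lambda>M. f (g ** M)) = dg f"
  using haar unfolding haar_def by blast

lemma dg_zero: "dg (\<lambda>M. 0) = 0"
  using dg_scale[OF goodG_Sch[OF goodG_zero], of 0] by simp

lemma dg_sum: "finite I \<Longrightarrow> (\<And>t. t \<in> I \<Longrightarrow> goodG (\<phi> t)) \<Longrightarrow> dg (\<lambda>M. \<Sum>t\<in>I. \<phi> t M) = (\<Sum>t\<in>I. dg (\<phi> t))"
proof (induction I rule: finite_induct)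
  case empty thus ?case using dg_zero by simp
next
  case (insert a I)
  have "dg (\<lambda>M. \<Sum>t\<in>insert a I. \<phi> t M) = dg (\<lambda>M. \<phi> a M + (\<Sum>t\<in>I. \<phi> t M))"
    using insert by simp
  also have "\<dots> = dg (\<phi> a) + dg (\<lambda>M. \<Sum>t\<in>I. \<phi> t M)"
    using insert goodG_sum[of I \<phi>] goodG_Sch by (intro dg_add) auto
  finally show ?case using insert by simp
qed

definition vol :: "nat \<Rightarrow> complex" where "vol r = dg (ind r)"

lemma dg_cind: assumes "r \<ge> 1" "det g \<noteq> 0" shows "dg (cind r g) = vol r"
proof -
  have "inv2 g \<in> GL2" using det_inv2[OF assms(2)] assms(2) unfolding GL2_def by simp
  thus ?thesis unfolding cind_def vol_def using dg_inv goodG_Sch goodG_ind assms(1) by blast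
qed

end

context nalf
begin

definition Ix :: "nat \<Rightarrow> nat \<Rightarrow> (nat \<times> 'a \<times> 'a mat2) set" where
  "Ix n r = Sigma {..n} (\<lambda>a. Rb (n - a) \<times> Rep r)"

definition gt :: "nat \<Rightarrow> nat \<times> 'a \<times> 'a mat2 \<Rightarrow> 'a mat2" where
  "gt n t = H n (fst t) (fst (snd t)) ** snd (snd t)"

lemma Ix_finite: "finite (Ix n r)"
  unfolding Ix_def using Rb_finite Rep_finite by (intro finite_SigmaI) auto

lemma Rep_K0: "k \<in> Rep r \<Longrightarrow> k \<in> K0" unfolding Rep_def by simp

lemma gt_props:
  assumes "t \<in> Ix n r"
  shows "bnd 1 (gt n t)" "absv (det (gt n t)) = \<rho> ^ n" "det (gt n t) \<noteq> 0"
proof -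
  obtain a c k where t: "t = (a, c, k)" "a \<le> n" "c \<in> Rb (n - a)" "k \<in> Rep r"
    using assms unfolding Ix_def by auto
  have k: "bnd 1 k" "absv (det k) = 1" using Rep_K0[OF t(4)] unfolding K0_def by auto
  show "bnd 1 (gt n t)" unfolding gt_def t using bnd_mult[OF H_bnd[OF t(3)] k(1)] by simp
  show "absv (det (gt n t)) = \<rho> ^ n" unfolding gt_def t using H_det[OF t(2)] k
    by (simp add: det_mul av_mult av_power)
  thus "det (gt n t) \<noteq> 0" using rho_pos by auto
qed

lemma mat1_l: "mat 1 ** (A::'a mat2) = A" by simp
lemma mat1_r: "(A::'a mat2) ** mat 1 = A" by simp

lemma cind_unique:
  assumes r: "r \<ge> 1" and t: "t \<in> Ix n r" and t': "t' \<in> Ix n r"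
    and u: "u \<in> Kr r" "M = gt n t ** u" and u': "u' \<in> Kr r" "M = gt n t' ** u'"
  shows "t = t'"
proof -
  obtain a c k where tt: "t = (a, c, k)" "a \<le> n" "c \<in> Rb (n - a)" "k \<in> Rep r"
    using t unfolding Ix_def by auto
  obtain a' c' k' where tt': "t' = (a', c', k')" "a' \<le> n" "c' \<in> Rb (n - a')" "k' \<in> Rep r"
    using t' unfolding Ix_def by auto
  have ku: "k \<in> K0" "k' \<in> K0" "u \<in> K0" "u' \<in> K0" using Rep_K0 tt tt' Kr_K0 r u u' by auto
  have dn: "det k' \<noteq> 0" "det u' \<noteq> 0" "det u \<noteq> 0" using K0_det ku by auto
  define w where "w = k ** (u ** (inv2 u' ** inv2 k'))"
  have wK: "w \<in> K0" unfolding w_def using ku K0_mult K0_inv by simp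
  have e1: "H n a c ** (k ** u) = H n a' c' ** (k' ** u')"
    using u u' tt tt' unfolding gt_def by (simp add: matrix_mul_assoc)
  have "H n a c ** w = (H n a c ** (k ** u)) ** (inv2 u' ** inv2 k')"
    unfolding w_def by (simp add: matrix_mul_assoc)
  also have "\<dots> = H n a' c' ** (k' ** (u' ** inv2 u') ** inv2 k')" unfolding e1 by (simp add: matrix_mul_assoc)
  also have "\<dots> = H n a' c'" using inv2_right[OF dn(2)] inv2_right[OF dn(1)] by simp
  finally have "H n a' c' = H n a c ** w" by simp
  hence ac: "a = a' \<and> c = c'" using H_uniq[OF tt(2) tt'(2) tt(3) tt'(3) wK] by blast
  have dH: "det (H n a c) \<noteq> 0" using H_det[OF tt(2)] by simp
  have "k ** u = k' ** u'" using e1 ac inv2_cancel[OF dH] by metis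
  hence "inv2 k' ** k = u' ** inv2 u"
  proof -
    assume ku': "k ** u = k' ** u'"
    have "inv2 k' ** k = inv2 k' ** ((k ** u) ** inv2 u)" using inv2_right[OF dn(3)] by (simp add: matrix_mul_assoc[symmetric])
    also have "\<dots> = u' ** inv2 u" using ku' inv2_cancel[OF dn(1)] by (simp add: matrix_mul_assoc[symmetric])
    finally show ?thesis .
  qed
  moreover have "u' ** inv2 u \<in> Kr r" using Kr_mult Kr_inv r u u' by blast
  ultimately have "k = k'" using Rep_uniq tt(4) tt'(4) by simp
  thus ?thesis using tt tt' ac by simp
qed

lemma cind_exists:
  assumes r: "r \<ge> 1" and M: "bnd 1 M" "absv (det M) = \<rho> ^ n"
  shows "\<exists>t\<in>Ix n r. \<exists>u\<in>Kr r. M = gt n t ** u"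
proof -
  obtain a c w where h: "a \<le> n" "c \<in> Rb (n-a)" "w \<in> K0" "M ** w = H n a c" using herm M by blast
  have dw: "det w \<noteq> 0" using K0_det h by blast
  obtain k where k: "k \<in> Rep r" "inv2 k ** inv2 w \<in> Kr r" using Rep_ex[OF r K0_inv[OF h(3)]] by blast
  have dk: "det k \<noteq> 0" using K0_det Rep_K0 k by blast
  have "gt n (a, c, k) ** (inv2 k ** inv2 w) = H n a c ** (k ** (inv2 k ** inv2 w))"
    unfolding gt_def by (simp add: matrix_mul_assoc)
  also have "\<dots> = H n a c ** inv2 w" using inv2_cancel'[OF dk, of "inv2 w"] by simp
  also have "\<dots> = M" using h(4)[symmetric] inv2_right[OF dw] by (simp add: matrix_mul_assoc[symmetric])
  finally have "M = gt n (a, c, k) ** (inv2 k ** inv2 w)" by simp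
  moreover have "(a, c, k) \<in> Ix n r" unfolding Ix_def using h k by simp
  ultimately show ?thesis using k by blast
qed

lemma cind_region:
  assumes r: "r \<ge> 1" and t: "t \<in> Ix n r" and u: "u \<in> Kr r" "M = gt n t ** u"
  shows "bnd 1 M" "absv (det M) = \<rho> ^ n" "mdist absv M (gt n t) \<le> \<rho> ^ r"
proof -
  have g: "bnd 1 (gt n t)" "absv (det (gt n t)) = \<rho> ^ n" using gt_props[OF t] by auto
  have ub: "bnd 1 u" "bnd (\<rho> ^ r) (u - mat 1)" using u unfolding Kr_def by auto
  show "bnd 1 M" using bnd_mult[OF g(1) ub(1)] u by simp
  show "absv (det M) = \<rho> ^ n" using u g Kr_det[OF r u(1)] by (simp add: det_mul av_mult)
  have "M - gt n t = gt n t ** (u - mat 1)" using u by (simp add: mm_diff_left)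
  moreover have "bnd (1 * \<rho> ^ r) (gt n t ** (u - mat 1))" using bnd_mult[OF g(1) ub(2)] by simp
  ultimately show "mdist absv M (gt n t) \<le> \<rho> ^ r" using mdist_bnd by simp
qed

end

context haarl
begin

lemma dec:
  assumes r: "r \<ge> 1" and f: "\<And>M N. mdist absv M N \<le> \<rho> ^ r \<Longrightarrow> f M = f N"
  shows "dg (\<lambda>M. if bnd 1 M \<and> absv (det M) = \<rho> ^ n then f M else 0) = vol r * (\<Sum>t\<in>Ix n r. f (gt n t))"
proof -
  have pw: "(if bnd 1 M \<and> absv (det M) = \<rho> ^ n then f M else 0) = (\<Sum>t\<in>Ix n r. f (gt n t) * cind r (gt n t) M)" for M
  proof (cases "bnd 1 M \<and> absv (det M) = \<rho> ^ n")
    case True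
    then obtain t0 u0 where t0: "t0 \<in> Ix n r" "u0 \<in> Kr r" "M = gt n t0 ** u0" using cind_exists r by blast
    have "cind r (gt n t) M = (if t = t0 then 1 else 0)" if "t \<in> Ix n r" for t
    proof -
      have "cind r (gt n t) M = (if \<exists>u\<in>Kr r. M = gt n t ** u then 1 else 0)"
        using cind_iff gt_props[OF that] by blast
      also have "(\<exists>u\<in>Kr r. M = gt n t ** u) \<longleftrightarrow> t = t0"
        using cind_unique[OF r that t0(1) _ _ t0(2,3)] t0 by blast
      finally show ?thesis .
    qed
    hence "(\<Sum>t\<in>Ix n r. f (gt n t) * cind r (gt n t) M) = (\<Sum>t\<in>Ix n r. if t = t0 then f (gt n t) else 0)"
      by (intro sum.cong) auto
    also have "\<dots> = f (gt n t0)" using t0(1) Ix_finite by simp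
    also have "\<dots> = f M" using f cind_region(3)[OF r t0] by simp
    finally show ?thesis using True by simp
  next
    case False
    have "cind r (gt n t) M = 0" if "t \<in> Ix n r" for t
    proof -
      have "\<not> (\<exists>u\<in>Kr r. M = gt n t ** u)" using cind_region[OF r that] False by blast
      thus ?thesis using cind_iff gt_props[OF that] by simp
    qed
    hence "(\<Sum>t\<in>Ix n r. f (gt n t) * cind r (gt n t) M) = 0" by simp
    thus ?thesis by (subst if_not_P[OF False]) simp
  qed
  have "dg (\<lambda>M. if bnd 1 M \<and> absv (det M) = \<rho> ^ n then f M else 0) = dg (\<lambda>M. \<Sum>t\<in>Ix n r. f (gt n t) * cind r (gt n t) M)"
    using pw by simp
  also have "\<dots> = (\<Sum>t\<in>Ix n r. dg (\<lambda>M. f (gt n t) * cind r (gt n t) M))"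
    using Ix_finite goodG_scale goodG_cind r gt_props by (intro dg_sum) auto
  also have "\<dots> = (\<Sum>t\<in>Ix n r. f (gt n t) * vol r)"
    using dg_scale goodG_Sch goodG_cind r gt_props dg_cind by (intro sum.cong) auto
  finally show ?thesis by (simp add: sum_distrib_left mult.commute)
qed

end

context nalf
begin

abbreviation R :: complex where "R \<equiv> complex_of_real \<rho>"

lemma mdist_mk: "absv (a - a') \<le> e \<Longrightarrow> absv (b - b') \<le> e \<Longrightarrow> absv (c - c') \<le> e \<Longrightarrow> absv (d - d') \<le> e
   \<Longrightarrow> mdist absv (mk a b c d) (mk a' b' c' d') \<le> e"
  unfolding mdist_le by (auto simp: forall_2)

lemma e_nonneg: "absv x \<le> e \<Longrightarrow> e \<ge> 0" using av_nonneg order_trans by blast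

lemma R_qn: "R ^ k * of_nat (qn ^ k) = 1"
proof -
  have "\<rho> ^ k * real (qn ^ k) = 1" using rho_qn qn_ge2 by (simp add: power_mult_distrib[symmetric])
  hence "complex_of_real (\<rho> ^ k * real (qn ^ k)) = 1" by simp
  thus ?thesis by simp
qed

lemma R_qn2: "a + r \<le> n \<Longrightarrow> R ^ n * of_nat (qn ^ (n - a - r)) = R ^ (a + r)"
proof -
  assume "a + r \<le> n"
  hence "n = (a + r) + (n - a - r)" by simp
  hence "R ^ n = R ^ (a + r) * R ^ (n - a - r)" by (metis power_add)
  thus ?thesis using R_qn[of "n - a - r"] by (simp add: mult.assoc)
qed

definition T :: "nat \<Rightarrow> ('a mat2 \<Rightarrow> complex) \<Rightarrow> complex" where
  "T n G = (\<Sum>a\<in>{0..<Suc n}. \<Sum>c\<in>Rb (n - a). G (H n a c))"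

lemma geo: "(\<Sum>a\<in>{r..<r+m}. R ^ (a + r)) * (1 - R) = R ^ (2*r) - R ^ (2*r+m)"
proof (induction m)
  case 0 thus ?case by simp
next
  case (Suc m)
  have e: "r + m + r = 2*r + m" by simp
  have "(\<Sum>a\<in>{r..<r+Suc m}. R ^ (a + r)) = (\<Sum>a\<in>{r..<r+m}. R ^ (a + r)) + R ^ (2*r + m)"
    using e by (simp del: mult_2 add: e[symmetric])
  hence "(\<Sum>a\<in>{r..<r+Suc m}. R ^ (a + r)) * (1 - R) = (\<Sum>a\<in>{r..<r+m}. R ^ (a + r)) * (1 - R) + R ^ (2*r+m) * (1 - R)"
    by (simp add: distrib_right)
  also have "\<dots> = (R ^ (2*r) - R ^ (2*r+m)) + (R ^ (2*r+m) - R ^ (2*r + Suc m))"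
    using Suc.IH by (simp add: algebra_simps)
  also have "\<dots> = R ^ (2*r) - R ^ (2*r + Suc m)" by simp
  finally show ?case .
qed

lemma count:
  assumes r: "r \<ge> 1" and G: "\<And>M N. mdist absv M N \<le> \<rho> ^ r \<Longrightarrow> G M = G N"
  shows "\<exists>\<alpha> \<beta>. \<forall>n\<ge>2*r. R ^ n * T n G = \<alpha> + \<beta> * R ^ n"
proof -
  define S1 where "S1 a = (\<Sum>c\<in>Rb r. G (mk (pp ^ a) 0 c 0))" for a
  define C0 where "C0 = (\<Sum>c\<in>Rb r. G (mk 0 0 c 0))"
  define B1 where "B1 = (\<Sum>b\<in>{0..<r}. \<Sum>c\<in>Rb b. G (mk 0 0 c (pp ^ b)))"
  have R1: "1 - R \<noteq> 0" using rho_lt1 by (metis less_irrefl of_real_1 of_real_eq_iff right_minus_eq)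
  have rpow: "absv (pp ^ k) \<le> \<rho> ^ r" if "k \<ge> r" for k using rho_pow_anti that by (simp add: av_power)
  have modc: "G (mk x 0 c y) = G (mk x 0 c' y)" if "absv (c - c') \<le> \<rho> ^ r" for x y c c'
    using G mdist_mk[of x x "\<rho> ^ r" 0 0 c c' y y] that by (simp add: e_nonneg[OF that])
  have "R ^ n * T n G = (\<Sum>a\<in>{0..<r}. R ^ (a + r) * S1 a) + C0 * R ^ (2*r) / (1 - R)
           + (B1 - C0 * R / (1 - R)) * R ^ n" if n: "n \<ge> 2 * r" for n
  proof -
    define F where "F a = (\<Sum>c\<in>Rb (n - a). G (H n a c))" for a
    have T3: "T n G = (\<Sum>a\<in>{0..<r}. F a) + (\<Sum>a\<in>{r..<r + (n + 1 - 2*r)}. F a) + (\<Sum>a\<in>{n+1-r..<Suc n}. F a)"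
    proof -
      have "(\<Sum>a\<in>{0..<r}. F a) + (\<Sum>a\<in>{r..<n+1-r}. F a) = (\<Sum>a\<in>{0..<n+1-r}. F a)"
        using n by (intro sum.atLeastLessThan_concat) auto
      moreover have "(\<Sum>a\<in>{0..<n+1-r}. F a) + (\<Sum>a\<in>{n+1-r..<Suc n}. F a) = (\<Sum>a\<in>{0..<Suc n}. F a)"
        using n by (intro sum.atLeastLessThan_concat) auto
      moreover have "r + (n + 1 - 2*r) = n + 1 - r" using n by simp
      ultimately show ?thesis unfolding T_def F_def by simp
    qed
    have p1: "R ^ n * F a = R ^ (a + r) * S1 a" if a: "a < r" for a
    proof -
      have "F a = (\<Sum>c\<in>Rb (n - a). G (mk (pp ^ a) 0 c 0))"
        unfolding F_def H_def
      proof (intro sum.cong refl G)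
        fix c assume "c \<in> Rb (n - a)"
        show "mdist absv (mk (pp ^ a) 0 c (pp ^ (n - a))) (mk (pp ^ a) 0 c 0) \<le> \<rho> ^ r"
          using rpow[of "n - a"] a n rho_pos by (intro mdist_mk) auto
      qed
      also have "\<dots> = of_nat (qn ^ (n - a - r)) * S1 a"
        unfolding S1_def using a n modc by (subst Rb_sum_mod[of r]) (auto simp: diff_diff_left)
      finally show ?thesis using R_qn2[of a r n] a n by (simp add: mult.assoc[symmetric])
    qed
    have p2: "R ^ n * F a = R ^ (a + r) * C0" if a: "r \<le> a" "a < n + 1 - r" for a
    proof -
      have "F a = (\<Sum>c\<in>Rb (n - a). G (mk 0 0 c 0))"
        unfolding F_def H_def
      proof (intro sum.cong refl G)
        fix c assume "c \<in> Rb (n - a)"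
        show "mdist absv (mk (pp ^ a) 0 c (pp ^ (n - a))) (mk 0 0 c 0) \<le> \<rho> ^ r"
          using rpow[of "n - a"] rpow[of a] a n rho_pos by (intro mdist_mk) auto
      qed
      also have "\<dots> = of_nat (qn ^ (n - a - r)) * C0"
        unfolding C0_def using a n modc by (subst Rb_sum_mod[of r]) (auto simp: diff_diff_left)
      finally show ?thesis using R_qn2[of a r n] a n by (simp add: mult.assoc[symmetric])
    qed
    have p3: "F a = (\<Sum>c\<in>Rb (n - a). G (mk 0 0 c (pp ^ (n - a))))" if a: "n + 1 - r \<le> a" for a
      unfolding F_def H_def
    proof (intro sum.cong refl G)
      fix c assume "c \<in> Rb (n - a)"
      show "mdist absv (mk (pp ^ a) 0 c (pp ^ (n - a))) (mk 0 0 c (pp ^ (n - a))) \<le> \<rho> ^ r"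
        using rpow[of a] a n rho_pos by (intro mdist_mk) auto
    qed
    have s3: "(\<Sum>a\<in>{n+1-r..<Suc n}. F a) = B1"
    proof -
      have "(\<Sum>a\<in>{n+1-r..<Suc n}. F a) = (\<Sum>a\<in>{n+1-r..<Suc n}. \<Sum>c\<in>Rb (n - a). G (mk 0 0 c (pp ^ (n - a))))"
        using p3 by (intro sum.cong) auto
      also have "\<dots> = (\<Sum>b\<in>{0..<r}. \<Sum>c\<in>Rb b. G (mk 0 0 c (pp ^ b)))"
      proof (rule sum.reindex_bij_witness[of _ "\<lambda>b. n - b" "\<lambda>a. n - a"])
        show "\<And>a. a \<in> {n + 1 - r..<Suc n} \<Longrightarrow> n - (n - a) = a" by auto
        show "\<And>a. a \<in> {n + 1 - r..<Suc n} \<Longrightarrow> n - a \<in> {0..<r}" using n r by auto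
        show "\<And>b. b \<in> {0..<r} \<Longrightarrow> n - (n - b) = b" using n by auto
        show "\<And>b. b \<in> {0..<r} \<Longrightarrow> n - b \<in> {n + 1 - r..<Suc n}" using n by auto
      qed simp
      finally show ?thesis unfolding B1_def .
    qed
    have s1: "R ^ n * (\<Sum>a\<in>{0..<r}. F a) = (\<Sum>a\<in>{0..<r}. R ^ (a + r) * S1 a)"
      using p1 by (simp add: sum_distrib_left)
    have s2: "R ^ n * (\<Sum>a\<in>{r..<r + (n + 1 - 2*r)}. F a) = C0 * (\<Sum>a\<in>{r..<r + (n + 1 - 2*r)}. R ^ (a + r))"
      using p2 n by (simp add: sum_distrib_left sum_distrib_right mult.commute)
    have "(\<Sum>a\<in>{r..<r + (n + 1 - 2*r)}. R ^ (a + r)) = (R ^ (2*r) - R ^ (2*r + (n + 1 - 2*r))) / (1 - R)"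
      using geo[of r "n + 1 - 2*r"] R1 by (simp add: eq_divide_eq)
    also have "2*r + (n + 1 - 2*r) = Suc n" using n by simp
    finally have g: "(\<Sum>a\<in>{r..<r + (n + 1 - 2*r)}. R ^ (a + r)) = (R ^ (2*r) - R * R ^ n) / (1 - R)" by simp
    have "R ^ n * T n G = R ^ n * (\<Sum>a\<in>{0..<r}. F a) + R ^ n * (\<Sum>a\<in>{r..<r + (n + 1 - 2*r)}. F a) + R ^ n * B1"
      unfolding T3 s3 by (simp add: distrib_left)
    also have "\<dots> = (\<Sum>a\<in>{0..<r}. R ^ (a + r) * S1 a) + C0 * ((R ^ (2*r) - R * R ^ n) / (1 - R)) + R ^ n * B1"
      using s1 s2 g by simp
    also have "C0 * ((R ^ (2*r) - R * R ^ n) / (1 - R)) = C0 * R ^ (2*r) / (1 - R) - C0 * R / (1 - R) * R ^ n"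
      by (simp add: diff_divide_distrib right_diff_distrib)
    finally show ?thesis by (simp add: algebra_simps)
  qed
  thus ?thesis by blast
qed

end

context nalf
begin

lemma rho_powi_pos: "\<rho> powi n > 0" using rho_pos by simp

lemma rho_powi_strict: "m < n \<Longrightarrow> \<rho> powi n < \<rho> powi m"
  using power_int_strict_decreasing rho_pos rho_lt1 by blast

lemma psi_good:
  assumes f: "nice r s f"
  shows "goodG (\<lambda>M. if absv (det M) = \<rho> powi n then c * f M else 0)"
proof -
  define B where "B = inverse \<rho> ^ s"
  have B: "B \<ge> 1" unfolding B_def using rho_pos rho_lt1 by (simp add: one_le_inverse one_le_power)
  obtain r0 where r0: "\<rho> ^ r0 < \<rho> powi n / B" using rho_pow_small[of "\<rho> powi n / B"] rho_powi_pos B by auto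
  define r' where "r' = max r r0"
  have r'1: "\<rho> ^ r' \<le> \<rho> ^ r" "\<rho> ^ r' \<le> \<rho> ^ r0" unfolding r'_def using rho_pow_anti by auto
  have shell: "absv (det N) = \<rho> powi n" if "f M \<noteq> 0" "mdist absv M N \<le> \<rho> ^ r'" "absv (det M) = \<rho> powi n" for M N
  proof -
    have bM: "bnd B M" using f that unfolding nice_def B_def by blast
    have "mdist absv N M \<le> B" using that(2) mdist_sym[of M N] rpow_le1[of r'] B by linarith
    hence bN: "bnd B N" using bnd_close bM by blast
    have "absv (det N - det M) \<le> B * mdist absv N M"
      using det_diff_bnd[OF bN bM order_refl] B mdist_nonneg by simp
    also have "\<dots> \<le> B * \<rho> ^ r0" using that(2) mdist_sym[of M N] r'1 B by (intro mult_left_mono) auto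
    also have "\<dots> < \<rho> powi n" using r0 B by (simp add: less_divide_eq mult.commute)
    finally have "absv (det N - det M) < absv (det M)" using that(3) by simp
    hence "absv (det N) = absv (det M)" by (rule av_close_eq)
    thus ?thesis using that(3) by simp
  qed
  have "nice r' s (\<lambda>M. if absv (det M) = \<rho> powi n then c * f M else 0)"
    unfolding nice_def
  proof (intro conjI allI impI)
    fix M N assume d: "mdist absv M N \<le> \<rho> ^ r'"
    hence fe: "f M = f N" using f r'1 unfolding nice_def by (meson order_trans)
    have d': "mdist absv N M \<le> \<rho> ^ r'" using d mdist_sym[of M N] by simp
    show "(if absv (det M) = \<rho> powi n then c * f M else 0) = (if absv (det N) = \<rho> powi n then c * f N else 0)"
    proof (cases "f M = 0")
      case True thus ?thesis using fe by simp
    next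
      case False
      hence "f N \<noteq> 0" using fe by simp
      thus ?thesis using shell[OF False d] shell[OF \<open>f N \<noteq> 0\<close> d'] fe by auto
    qed
  next
    fix M assume "(if absv (det M) = \<rho> powi n then c * f M else 0) \<noteq> 0"
    hence "f M \<noteq> 0" by (auto split: if_splits)
    thus "bnd (inverse \<rho> ^ s) M" using f unfolding nice_def by blast
  qed
  moreover have "\<forall>M. (if absv (det M) = \<rho> powi n then c * f M else 0) \<noteq> 0 \<longrightarrow> \<rho> powi n \<le> absv (det M)"
    by auto
  ultimately show ?thesis unfolding goodG_def using rho_powi_pos by blast
qed

lemma mdist_mult_right: "bnd 1 k \<Longrightarrow> mdist absv (M ** k) (N ** k) \<le> mdist absv M N"
proof -
  assume k: "bnd 1 k"
  have "M ** k - N ** k = (M - N) ** k" by (simp add: mm_diff_right)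
  moreover have "bnd (mdist absv M N * 1) ((M - N) ** k)"
    using bnd_mult[of "mdist absv M N" "M - N" 1 k] k mdist_bnd[of M N] mdist_nonneg[of M N] by blast
  ultimately show ?thesis using mdist_bnd by simp
qed

lemma Ix_sum: "(\<Sum>t\<in>Ix n r. F (gt n t)) = (\<Sum>k\<in>Rep r. T n (\<lambda>M. F (M ** k)))"
proof -
  have "(\<Sum>t\<in>Ix n r. F (gt n t)) = (\<Sum>a\<in>{..n}. \<Sum>ck\<in>Rb (n - a) \<times> Rep r. F (H n a (fst ck) ** snd ck))"
    unfolding Ix_def gt_def using Rb_finite Rep_finite by (subst sum.Sigma) (auto simp: case_prod_beta)
  also have "\<dots> = (\<Sum>a\<in>{..n}. \<Sum>c\<in>Rb (n - a). \<Sum>k\<in>Rep r. F (H n a c ** k))"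
    by (simp add: sum.cartesian_product case_prod_beta)
  also have "\<dots> = (\<Sum>a\<in>{..n}. \<Sum>k\<in>Rep r. \<Sum>c\<in>Rb (n - a). F (H n a c ** k))"
    by (simp add: sum.swap[of _ "Rb _"])
  also have "\<dots> = (\<Sum>k\<in>Rep r. \<Sum>a\<in>{..n}. \<Sum>c\<in>Rb (n - a). F (H n a c ** k))"
    by (rule sum.swap)
  also have "\<dots> = (\<Sum>k\<in>Rep r. T n (\<lambda>M. F (M ** k)))"
    unfolding T_def by (simp add: atLeast0LessThan lessThan_Suc_atMost)
  finally show ?thesis .
qed

end

context haarl
begin

definition psi :: "('a mat2 \<Rightarrow> complex) \<Rightarrow> int \<Rightarrow> 'a mat2 \<Rightarrow> complex" where
  "psi f n = (\<lambda>M. if absv (det M) = \<rho> powi n then complex_of_real (\<rho> powi n) * f M else 0)"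

definition xs :: "('a mat2 \<Rightarrow> complex) \<Rightarrow> int \<Rightarrow> complex" where
  "xs f n = dg (psi f n)"

lemma psi_Sch: "nice r s f \<Longrightarrow> psi f n \<in> Sch absv GL2"
  unfolding psi_def using psi_good goodG_Sch by blast

lemma xs_add: assumes "f \<in> Sch absv UNIV" "h \<in> Sch absv UNIV"
  shows "xs (\<lambda>M. f M + h M) n = xs f n + xs h n"
proof -
  obtain r s where f: "nice r s f" using SchU_nice assms by blast
  obtain r' s' where h: "nice r' s' h" using SchU_nice assms by blast
  have "psi (\<lambda>M. f M + h M) n = (\<lambda>M. psi f n M + psi h n M)" unfolding psi_def by (auto simp: distrib_left)
  thus ?thesis unfolding xs_def using dg_add psi_Sch f h by simp
qed

lemma xs_scale: assumes "f \<in> Sch absv UNIV"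
  shows "xs (\<lambda>M. a * f M) n = a * xs f n"
proof -
  obtain r s where f: "nice r s f" using SchU_nice assms by blast
  have "psi (\<lambda>M. a * f M) n = (\<lambda>M. a * psi f n M)" unfolding psi_def by auto
  thus ?thesis unfolding xs_def using dg_scale psi_Sch f by simp
qed

lemma xs_shift:
  assumes f: "nice r s f" and g: "g \<in> GL2" "absv (det g) = \<rho> powi m"
  shows "complex_of_real (\<rho> powi m) * xs (\<lambda>M. f (g ** M)) n = xs f (n + m)"
proof -
  have dg0: "det g \<noteq> 0" using g unfolding GL2_def by simp
  obtain r' s' where f': "nice r' s' (\<lambda>M. f (g ** M))" using nice_translate f dg0 by blast
  have eq: "psi f (n + m) (g ** M) = complex_of_real (\<rho> powi m) * psi (\<lambda>M. f (g ** M)) n M" for M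
  proof -
    have pm: "\<rho> powi m > 0" using rho_powi_pos by blast
    have "absv (det (g ** M)) = \<rho> powi m * absv (det M)" using g by (simp add: det_mul av_mult)
    moreover have "\<rho> powi (n + m) = \<rho> powi m * \<rho> powi n" using rho_pos by (simp add: power_int_add)
    ultimately have "(absv (det (g ** M)) = \<rho> powi (n + m)) \<longleftrightarrow> (absv (det M) = \<rho> powi n)" using pm by simp
    thus ?thesis unfolding psi_def using \<open>\<rho> powi (n + m) = \<rho> powi m * \<rho> powi n\<close> by simp
  qed
  have "xs f (n + m) = dg (\<lambda>M. psi f (n + m) (g ** M))" unfolding xs_def using dg_inv g psi_Sch f by simp
  also have "\<dots> = dg (\<lambda>M. complex_of_real (\<rho> powi m) * psi (\<lambda>M. f (g ** M)) n M)" using eq by simp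
  also have "\<dots> = complex_of_real (\<rho> powi m) * xs (\<lambda>M. f (g ** M)) n" unfolding xs_def using dg_scale psi_Sch f' by simp
  finally show ?thesis by simp
qed

lemma xs_low:
  assumes f: "nice r s f" and n: "n < - 2 * int s"
  shows "xs f n = 0"
proof -
  have "psi f n = (\<lambda>M. 0)"
  proof
    fix M
    show "psi f n M = 0"
    proof (cases "f M = 0")
      case False
      hence "bnd (inverse \<rho> ^ s) M" using f unfolding nice_def by blast
      hence "absv (det M) \<le> inverse \<rho> ^ s * inverse \<rho> ^ s" using bnd_det rho_pos by simp
      also have "\<dots> = \<rho> powi (- 2 * int s)"
      proof -
        have "- 2 * int s = - int (s + s)" by simp
        hence "\<rho> powi (- 2 * int s) = inverse (\<rho> ^ (s + s))" by (simp only: power_int_minus power_int_of_nat)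
        thus ?thesis by (simp add: power_add power_inverse)
      qed
      also have "\<dots> < \<rho> powi n" using rho_powi_strict n by blast
      finally show ?thesis unfolding psi_def by simp
    qed (simp add: psi_def)
  qed
  thus ?thesis unfolding xs_def using dg_zero by simp
qed

lemma xs_restrict:
  assumes f: "f \<in> Sch absv GL2"
  shows "\<exists>L U. L \<le> U \<and> (\<forall>n. n < L \<or> n > U \<longrightarrow> xs f n = 0) \<and>
     (\<Sum>n\<in>{L..U}. xs f n) = dg (\<lambda>M. complex_of_real (absv (det M)) * f M)"
proof -
  obtain r s where ns: "nice r s f" using SchG_nice f by blast
  obtain c where c: "c > 0" "\<forall>M. f M \<noteq> 0 \<longrightarrow> absv (det M) \<ge> c" using SchG_det f by blast
  obtain k where k: "\<rho> ^ k < c" using rho_pow_small c by blast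
  define L where "L = - 2 * int s"
  define U where "U = int k"
  have bndM: "absv (det M) \<le> \<rho> powi L" if "f M \<noteq> 0" for M
  proof -
    have "bnd (inverse \<rho> ^ s) M" using ns that unfolding nice_def by blast
    hence "absv (det M) \<le> inverse \<rho> ^ s * inverse \<rho> ^ s" using bnd_det rho_pos by simp
    also have "\<dots> = \<rho> powi L"
    proof -
      have "L = - int (s + s)" unfolding L_def by simp
      hence "\<rho> powi L = inverse (\<rho> ^ (s + s))" by (simp only: power_int_minus power_int_of_nat)
      thus ?thesis by (simp add: power_add power_inverse)
    qed
    finally show ?thesis .
  qed
  have zero_hi: "psi f n = (\<lambda>M. 0)" if "n > U" for n
  proof
    fix M
    show "psi f n M = 0"
    proof (cases "f M = 0")
      case False
      have "\<rho> powi n < \<rho> powi U" using rho_powi_strict that by blast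
      also have "\<dots> < c" using k unfolding U_def by simp
      finally show ?thesis using c False unfolding psi_def by force
    qed (simp add: psi_def)
  qed
  have vanish: "\<forall>n. n < L \<or> n > U \<longrightarrow> xs f n = 0"
    using xs_low[OF ns] zero_hi dg_zero unfolding xs_def L_def by auto
  have pw: "complex_of_real (absv (det M)) * f M = (\<Sum>n\<in>{L..U}. psi f n M)" for M
  proof (cases "f M = 0")
    case True
    hence "psi f n M = 0" for n unfolding psi_def by simp
    thus ?thesis using True by simp
  next
    case False
    have "det M \<noteq> 0" using c False by force
    then obtain n0 where n0: "absv (det M) = \<rho> powi n0" using disc by blast
    have "\<rho> powi n0 \<le> \<rho> powi L" using bndM[OF False] n0 by simp
    hence "L \<le> n0" using rho_powi_strict by (meson not_le)
    moreover have "n0 \<le> U"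
    proof (rule ccontr)
      assume "\<not> n0 \<le> U"
      hence "\<rho> powi n0 < \<rho> powi U" using rho_powi_strict by simp
      also have "\<dots> < c" using k unfolding U_def by simp
      finally show False using c False n0 by force
    qed
    ultimately have n0in: "n0 \<in> {L..U}" by simp
    have "psi f n M = (if n = n0 then complex_of_real (absv (det M)) * f M else 0)" for n
      unfolding psi_def using n0 rho_powi_inj by auto
    hence "(\<Sum>n\<in>{L..U}. psi f n M) = (\<Sum>n\<in>{L..U}. if n = n0 then complex_of_real (absv (det M)) * f M else 0)"
      by simp
    also have "\<dots> = complex_of_real (absv (det M)) * f M" using n0in by simp
    finally show ?thesis by simp
  qed
  have "dg (\<lambda>M. complex_of_real (absv (det M)) * f M) = dg (\<lambda>M. \<Sum>n\<in>{L..U}. psi f n M)"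
    using pw by simp
  also have "\<dots> = (\<Sum>n\<in>{L..U}. xs f n)" unfolding xs_def
    using psi_good[OF ns] unfolding psi_def by (intro dg_sum) auto
  finally have S: "dg (\<lambda>M. complex_of_real (absv (det M)) * f M) = (\<Sum>n\<in>{L..U}. xs f n)" .
  have "L \<le> U" unfolding L_def U_def by simp
  thus ?thesis using vanish S by metis
qed

end

context haarl
begin

lemma T_scale: "T n (\<lambda>M. c * G M) = c * T n G"
  unfolding T_def by (simp only: sum_distrib_left)

lemma xs_unit:
  assumes r: "r \<ge> 1" and F: "nice r 0 F"
  shows "\<exists>A B. \<forall>n::nat\<ge>2*r. xs F (int n) = A + B * R ^ n"
proof -
  have Fc: "\<And>M N. mdist absv M N \<le> \<rho> ^ r \<Longrightarrow> F M = F N" using F unfolding nice_def by blast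
  have Fs: "\<And>M. F M \<noteq> 0 \<Longrightarrow> bnd 1 M" using F unfolding nice_def by simp
  have "\<forall>k\<in>Rep r. \<exists>\<alpha> \<beta>. \<forall>n\<ge>2*r. R ^ n * T n (\<lambda>M. F (M ** k)) = \<alpha> + \<beta> * R ^ n"
  proof
    fix k assume k: "k \<in> Rep r"
    have kb: "bnd 1 k" using Rep_K0[OF k] unfolding K0_def by simp
    show "\<exists>\<alpha> \<beta>. \<forall>n\<ge>2*r. R ^ n * T n (\<lambda>M. F (M ** k)) = \<alpha> + \<beta> * R ^ n"
    proof (rule count[OF r])
      fix M N assume "mdist absv M N \<le> \<rho> ^ r"
      hence "mdist absv (M ** k) (N ** k) \<le> \<rho> ^ r" using mdist_mult_right[OF kb, of M N] by linarith
      thus "F (M ** k) = F (N ** k)" using Fc by blast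
    qed
  qed
  then obtain \<alpha> where "\<forall>k\<in>Rep r. \<exists>\<beta>. \<forall>n\<ge>2*r. R ^ n * T n (\<lambda>M. F (M ** k)) = \<alpha> k + \<beta> * R ^ n"
    by (metis (no_types) bchoice)
  then obtain \<beta> where ab: "\<forall>k\<in>Rep r. \<forall>n\<ge>2*r. R ^ n * T n (\<lambda>M. F (M ** k)) = \<alpha> k + \<beta> k * R ^ n"
    by (metis (no_types) bchoice)
  have "xs F (int n) = vol r * (\<Sum>k\<in>Rep r. \<alpha> k) + vol r * (\<Sum>k\<in>Rep r. \<beta> k) * R ^ n" if n: "n \<ge> 2*r" for n
  proof -
    have "psi F (int n) = (\<lambda>M. if bnd 1 M \<and> absv (det M) = \<rho> ^ n then R ^ n * F M else 0)"
      unfolding psi_def using Fs by (auto simp: fun_eq_iff)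
    hence "xs F (int n) = vol r * (\<Sum>t\<in>Ix n r. R ^ n * F (gt n t))"
      unfolding xs_def using dec[OF r, of "\<lambda>M. R ^ n * F M" n] Fc by simp
    also have "\<dots> = vol r * (\<Sum>k\<in>Rep r. R ^ n * T n (\<lambda>M. F (M ** k)))"
      using Ix_sum[of "\<lambda>M. R ^ n * F M" n r] T_scale[of n "R ^ n"] by simp
    also have "\<dots> = vol r * (\<Sum>k\<in>Rep r. \<alpha> k + \<beta> k * R ^ n)" using ab n by simp
    finally show ?thesis by (simp add: sum.distrib sum_distrib_right distrib_left mult.assoc)
  qed
  thus ?thesis by blast
qed

lemma mat_mult_entry: "(mat x ** (M::'a mat2)) $ i $ j = x * M $ i $ j"
  using exhaust_2[of i] by (auto simp add: mult_entry mat_def)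

lemma xs_eventual:
  assumes f: "f \<in> Sch absv UNIV"
  shows "\<exists>N A B. \<forall>n\<ge>N. xs f n = A + B * complex_of_real (\<rho> powi n)"
proof -
  obtain r0 s where f0: "nice r0 s f" using SchU_nice f by blast
  define r where "r = max r0 1"
  have fn: "nice r s f" using nice_mono[OF f0] r_def by simp
  have r1: "r \<ge> 1" unfolding r_def by simp
  define x where "x = inverse pp ^ s"
  define g where "g = (mat x :: 'a mat2)"
  have ax: "absv x = inverse \<rho> ^ s" unfolding x_def by (simp add: av_power av_inverse)
  have gM: "(g ** M) $ i $ j = x * M $ i $ j" for M :: "'a mat2" and i j unfolding g_def using mat_mult_entry[of x M i j] by simp
  have dg: "det g = x * x" unfolding g_def det_2 by simp
  have x0: "x \<noteq> 0" unfolding x_def by simp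
  have gG: "g \<in> GL2" unfolding GL2_def using dg x0 by simp
  have adg: "absv (det g) = \<rho> powi (- (2 * int s))"
  proof -
    have "absv (det g) = inverse (\<rho> ^ (s + s))" using dg ax by (simp add: av_mult power_add power_inverse)
    also have "\<dots> = \<rho> powi (- (2 * int s))"
    proof -
      have "- (2 * int s) = - int (s + s)" by simp
      thus ?thesis by (simp only: power_int_minus power_int_of_nat)
    qed
    finally show ?thesis .
  qed
  define f' where "f' = (\<lambda>M. f (g ** M))"
  have "nice (r + s) 0 f'"
    unfolding nice_def
  proof (intro conjI allI impI)
    fix M N assume d: "mdist absv M N \<le> \<rho> ^ (r + s)"
    have "absv ((g ** M) $ i $ j - (g ** N) $ i $ j) \<le> \<rho> ^ r" for i j
    proof -
      have "absv ((g ** M) $ i $ j - (g ** N) $ i $ j) = inverse \<rho> ^ s * absv (M $ i $ j - N $ i $ j)"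
        unfolding gM by (simp add: right_diff_distrib[symmetric] av_mult ax)
      also have "\<dots> \<le> inverse \<rho> ^ s * \<rho> ^ (r + s)"
        using mdist_ge[of M i j N] d rho_pos by (intro mult_left_mono) auto
      also have "\<dots> = \<rho> ^ r" using rho_pos by (simp add: power_add power_inverse field_simps)
      finally show ?thesis .
    qed
    hence "mdist absv (g ** M) (g ** N) \<le> \<rho> ^ r" using mdist_le by blast
    thus "f' M = f' N" using fn unfolding nice_def f'_def by blast
  next
    fix M assume "f' M \<noteq> 0"
    hence b: "bnd (inverse \<rho> ^ s) (g ** M)" using fn unfolding nice_def f'_def by blast
    have "absv (M $ i $ j) \<le> 1" for i j
    proof -
      have "inverse \<rho> ^ s * absv (M $ i $ j) \<le> inverse \<rho> ^ s * 1" using b unfolding bnd_def gM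
        by (simp add: av_mult ax)
      thus ?thesis using rho_pos by (simp add: mult_le_cancel_left)
    qed
    thus "bnd (inverse \<rho> ^ 0) M" unfolding bnd_def by simp
  qed
  moreover have "r + s \<ge> 1" using r1 by simp
  ultimately obtain A B where AB: "\<forall>n::nat\<ge>2*(r+s). xs f' (int n) = A + B * R ^ n"
    using xs_unit by blast
  have sh: "complex_of_real (\<rho> powi (- (2 * int s))) * xs f' n = xs f (n + - (2 * int s))" for n
    unfolding f'_def using xs_shift[OF fn gG adg] by blast
  define c where "c = complex_of_real (\<rho> powi (- (2 * int s)))"
  have "xs f n = c * A + B * complex_of_real (\<rho> powi n)" if n: "n \<ge> 2 * int (r + s) - 2 * int s" for n
  proof -
    define k where "k = nat (n + 2 * int s)"
    have k: "int k = n + 2 * int s" "k \<ge> 2 * (r + s)" unfolding k_def using n by auto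
    have "xs f n = c * xs f' (int k)" using sh[of "int k"] k unfolding c_def by simp
    also have "xs f' (int k) = A + B * R ^ k" using AB k(2) by blast
    hence "c * xs f' (int k) = c * (A + B * R ^ k)" by simp
    also have "R ^ k = complex_of_real (\<rho> powi n) * complex_of_real (\<rho> powi (2 * int s))"
    proof -
      have "\<rho> ^ k = \<rho> powi (n + 2 * int s)" using k(1) by (metis power_int_of_nat)
      also have "\<dots> = \<rho> powi n * \<rho> powi (2 * int s)" using rho_pos by (simp add: power_int_add)
      finally show ?thesis by (metis of_real_mult of_real_power)
    qed
    also have "c * complex_of_real (\<rho> powi (2 * int s)) = 1" unfolding c_def
      using rho_pos by (simp add: power_int_minus of_real_mult[symmetric] del: of_real_mult)
    ultimately show ?thesis by (simp add: algebra_simps)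
  qed
  thus ?thesis by blast
qed

end

context nalf
begin

definition rp :: "int \<Rightarrow> complex" where "rp n = complex_of_real (\<rho> powi n)"

lemma rp_add: "rp (m + n) = rp m * rp n"
  unfolding rp_def using rho_pos by (simp add: power_int_add)

lemma rp_1: "rp 1 = R" unfolding rp_def by simp

lemma rp_nz: "rp n \<noteq> 0" unfolding rp_def using rho_pos by simp

lemma R_ne1: "R \<noteq> 1" using rho_lt1 by (metis less_irrefl of_real_1 of_real_eq_iff)

definition valid :: "(int \<Rightarrow> complex) \<Rightarrow> int \<Rightarrow> int \<Rightarrow> complex \<Rightarrow> complex \<Rightarrow> bool" where
  "valid x L N A B \<longleftrightarrow> L \<le> N \<and> (\<forall>n<L. x n = 0) \<and> (\<forall>n\<ge>N. x n = A + B * rp n)"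

definition V :: "(int \<Rightarrow> complex) \<Rightarrow> int \<Rightarrow> int \<Rightarrow> complex \<Rightarrow> complex \<Rightarrow> complex" where
  "V x L N A B = (\<Sum>n\<in>{L..<N}. x n) - of_int N * A + B * rp N / (1 - R)"

lemma valid_AB: assumes "valid x L N A B" "valid x L' N' A' B'" shows "A = A' \<and> B = B'"
proof -
  define n where "n = max N N'"
  have nN: "n \<ge> N" "n \<ge> N'" "n + 1 \<ge> N" "n + 1 \<ge> N'" unfolding n_def by auto
  have x1: "\<forall>m\<ge>N. x m = A + B * rp m" "\<forall>m\<ge>N'. x m = A' + B' * rp m" using assms unfolding valid_def by auto
  have "A + B * rp n = A' + B' * rp n" using x1(1)[rule_format, OF nN(1)] x1(2)[rule_format, OF nN(2)] by simp
  moreover have "A + B * rp (n + 1) = A' + B' * rp (n + 1)" using x1(1)[rule_format, OF nN(3)] x1(2)[rule_format, OF nN(4)] by simp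
  ultimately have "A + B * rp n = A' + B' * rp n" "A + B * rp (n + 1) = A' + B' * rp (n + 1)" by blast+
  hence e: "A + B * rp n = A' + B' * rp n" "A + B * rp (n + 1) = A' + B' * rp (n + 1)" by blast+
  have d1: "(B - B') * rp n = A' - A"
  proof -
    have "(B - B') * rp n = (A + B * rp n) - (A + B' * rp n)" by (simp add: algebra_simps)
    also have "\<dots> = (A' + B' * rp n) - (A + B' * rp n)" using e(1) by simp
    also have "\<dots> = A' - A" by simp
    finally show ?thesis .
  qed
  have d2: "(B - B') * rp (n + 1) = A' - A"
  proof -
    have "(B - B') * rp (n + 1) = (A + B * rp (n + 1)) - (A + B' * rp (n + 1))" by (simp add: algebra_simps)
    also have "\<dots> = (A' + B' * rp (n + 1)) - (A + B' * rp (n + 1))" using e(2) by simp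
    also have "\<dots> = A' - A" by simp
    finally show ?thesis .
  qed
  have "(B - B') * (rp n - rp (n + 1)) = 0" using d1 d2 by (simp add: right_diff_distrib)
  moreover have "rp n - rp (n + 1) \<noteq> 0"
  proof
    assume "rp n - rp (n + 1) = 0"
    hence "rp n * (1 - R) = 0" using rp_add[of n 1] rp_1 by (simp add: algebra_simps)
    thus False using rp_nz R_ne1 by simp
  qed
  ultimately have "B = B'" by simp
  thus ?thesis using \<open>A + B * rp n = A' + B' * rp n\<close> by simp
qed

lemma V_lower: assumes "valid x L N A B" "L' \<le> L" shows "V x L' N A B = V x L N A B"
proof -
  have u: "{L'..<N} = {L'..<L} \<union> {L..<N}" using assms unfolding valid_def by auto
  have "(\<Sum>n\<in>{L'..<N}. x n) = (\<Sum>n\<in>{L'..<L}. x n) + (\<Sum>n\<in>{L..<N}. x n)"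
    unfolding u by (rule sum.union_disjoint) auto
  moreover have "(\<Sum>n\<in>{L'..<L}. x n) = 0" using assms unfolding valid_def by simp
  ultimately show ?thesis unfolding V_def by simp
qed

lemma V_upper: assumes "valid x L N A B" shows "V x L (N + int j) A B = V x L N A B"
proof (induction j)
  case 0 thus ?case by simp
next
  case (Suc j)
  let ?M = "N + int j"
  have eq: "N + int (Suc j) = ?M + 1" by simp
  have LM: "L \<le> ?M" using assms unfolding valid_def by simp
  have xM: "x ?M = A + B * rp ?M" using assms unfolding valid_def by simp
  have "{L..<?M + 1} = insert ?M {L..<?M}" using LM by auto
  hence "(\<Sum>n\<in>{L..<?M + 1}. x n) = (\<Sum>n\<in>{L..<?M}. x n) + x ?M" by simp
  moreover have "B * rp (?M + 1) / (1 - R) = B * rp ?M / (1 - R) - B * rp ?M"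
  proof -
    have r1: "1 - R \<noteq> 0" using R_ne1 by simp
    have "rp (?M + 1) = rp ?M * R" using rp_add[of ?M 1] rp_1 by simp
    hence "B * rp (?M + 1) = B * rp ?M - B * rp ?M * (1 - R)" by (simp add: algebra_simps)
    hence "B * rp (?M + 1) / (1 - R) = (B * rp ?M - B * rp ?M * (1 - R)) / (1 - R)" by simp
    also have "\<dots> = B * rp ?M / (1 - R) - B * rp ?M" using r1 by (simp add: diff_divide_distrib)
    finally show ?thesis .
  qed
  ultimately have "V x L (?M + 1) A B = V x L ?M A B"
    unfolding V_def using xM by (simp add: algebra_simps)
  hence "V x L (N + int (Suc j)) A B = V x L ?M A B" by (simp only: eq)
  thus ?case using Suc.IH by simp
qed

lemma valid_lower: "valid x L N A B \<Longrightarrow> L0 \<le> L \<Longrightarrow> (\<forall>n<L0. x n = 0) \<Longrightarrow> valid x L0 N A B"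
  unfolding valid_def by simp

lemma V_unique: assumes "valid x L N A B" "valid x L' N' A' B'" shows "V x L N A B = V x L' N' A' B'"
proof -
  have AB: "A = A'" "B = B'" using valid_AB assms by auto
  have v2: "valid x L' N' A B" using assms(2) AB by simp
  define L0 where "L0 = min L L'"
  define M where "M = max N N'"
  have z: "\<forall>n<L0. x n = 0" using assms unfolding valid_def L0_def by simp
  have v0: "valid x L0 N A B" by (rule valid_lower[OF assms(1) _ z]) (simp add: L0_def)
  have v0': "valid x L0 N' A B" by (rule valid_lower[OF v2 _ z]) (simp add: L0_def)
  have e1: "N + int (nat (M - N)) = M" unfolding M_def by simp
  have e2: "N' + int (nat (M - N')) = M" unfolding M_def by simp
  have "V x L N A B = V x L0 N A B" using V_lower[OF assms(1), of L0] L0_def by simp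
  also have "\<dots> = V x L0 M A B" using V_upper[OF v0, of "nat (M - N)"] e1 by simp
  also have "\<dots> = V x L0 N' A B" using V_upper[OF v0', of "nat (M - N')"] e2 by simp
  also have "\<dots> = V x L' N' A B" using V_lower[OF v2, of L0] L0_def by simp
  finally show ?thesis using AB by simp
qed

definition reg :: "(int \<Rightarrow> complex) \<Rightarrow> complex" where
  "reg x = (SOME v. \<exists>L N A B. valid x L N A B \<and> v = V x L N A B)"

definition Acoef :: "(int \<Rightarrow> complex) \<Rightarrow> complex" where
  "Acoef x = (SOME A. \<exists>L N B. valid x L N A B)"

lemma reg_eq: assumes "valid x L N A B" shows "reg x = V x L N A B"
proof -
  have "\<exists>L' N' A' B'. valid x L' N' A' B' \<and> V x L N A B = V x L' N' A' B'" using assms by blast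
  hence "\<exists>L' N' A' B'. valid x L' N' A' B' \<and> reg x = V x L' N' A' B'"
    unfolding reg_def by (rule someI[where P = "\<lambda>v. \<exists>L N A B. valid x L N A B \<and> v = V x L N A B"])
  then obtain L' N' A' B' where v: "valid x L' N' A' B'" "reg x = V x L' N' A' B'" by blast
  show ?thesis using V_unique[OF assms v(1)] v(2) by simp
qed

lemma Acoef_eq: assumes "valid x L N A B" shows "Acoef x = A"
proof -
  have "\<exists>L N B'. valid x L N A B'" using assms by blast
  hence "\<exists>L' N' B'. valid x L' N' (Acoef x) B'"
    unfolding Acoef_def by (rule someI[where P = "\<lambda>A. \<exists>L N B. valid x L N A B"])
  then obtain L' N' B' where v: "valid x L' N' (Acoef x) B'" by blast
  show ?thesis using valid_AB[OF assms v] by simp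
qed

end

context nalf
begin

lemma valid_mono: "valid x L N A B \<Longrightarrow> L' \<le> L \<Longrightarrow> N \<le> N' \<Longrightarrow> valid x L' N' A B"
  unfolding valid_def by auto

lemma reg_add:
  assumes "valid x L1 N1 A1 B1" "valid y L2 N2 A2 B2"
  shows "reg (\<lambda>n. x n + y n) = reg x + reg y"
proof -
  define L where "L = min L1 L2"
  define N where "N = max N1 N2"
  have vx: "valid x L N A1 B1" using valid_mono[OF assms(1)] L_def N_def by simp
  have vy: "valid y L N A2 B2" using valid_mono[OF assms(2)] L_def N_def by simp
  have v: "valid (\<lambda>n. x n + y n) L N (A1 + A2) (B1 + B2)" using vx vy unfolding valid_def by (auto simp: algebra_simps)
  have "V (\<lambda>n. x n + y n) L N (A1 + A2) (B1 + B2) = V x L N A1 B1 + V y L N A2 B2"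
    unfolding V_def by (simp add: sum.distrib algebra_simps add_divide_distrib)
  thus ?thesis using reg_eq[OF v] reg_eq[OF vx] reg_eq[OF vy] by simp
qed

lemma valid_scale: "valid x L N A B \<Longrightarrow> valid (\<lambda>n. c * x n) L N (c * A) (c * B)"
  unfolding valid_def by (auto simp: algebra_simps)

lemma reg_scale:
  assumes "valid x L N A B"
  shows "reg (\<lambda>n. c * x n) = c * reg x"
proof -
  have "V (\<lambda>n. c * x n) L N (c * A) (c * B) = c * V x L N A B"
    unfolding V_def by (simp add: sum_distrib_left algebra_simps)
  thus ?thesis using reg_eq[OF valid_scale[OF assms]] reg_eq[OF assms] by simp
qed

lemma valid_shift: "valid x L N A B \<Longrightarrow> valid (\<lambda>n. x (n + m)) (L - m) (N - m) A (B * rp m)"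
  unfolding valid_def using rp_add by (auto simp: algebra_simps)

lemma reg_shift:
  assumes "valid x L N A B"
  shows "reg (\<lambda>n. x (n + m)) = reg x + of_int m * A"
proof -
  have s: "(\<Sum>n\<in>{L - m..<N - m}. x (n + m)) = (\<Sum>k\<in>{L..<N}. x k)"
    by (rule sum.reindex_bij_witness[of _ "\<lambda>k. k - m" "\<lambda>n. n + m"]) auto
  have r: "rp m * rp (N - m) = rp N" using rp_add[of m "N - m"] by simp
  have "V (\<lambda>n. x (n + m)) (L - m) (N - m) A (B * rp m) = V x L N A B + of_int m * A"
    unfolding V_def s using r by (simp add: algebra_simps)
  thus ?thesis using reg_eq[OF valid_shift[OF assms]] reg_eq[OF assms] by simp
qed

lemma valid_fin: "L \<le> N \<Longrightarrow> (\<And>n. n < L \<or> n \<ge> N \<Longrightarrow> x n = 0) \<Longrightarrow> valid x L N 0 0"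
  unfolding valid_def by auto

lemma reg_fin: "L \<le> N \<Longrightarrow> (\<And>n. n < L \<or> n \<ge> N \<Longrightarrow> x n = 0) \<Longrightarrow> reg x = (\<Sum>n\<in>{L..<N}. x n)"
  using reg_eq[OF valid_fin] unfolding V_def by simp

end

context haarl
begin

lemma xs_dec:
  assumes r: "r \<ge> 1" and F: "nice r 0 F"
  shows "xs F (int n) = vol r * (R ^ n * (\<Sum>t\<in>Ix n r. F (gt n t)))"
proof -
  have Fc: "\<And>M N. mdist absv M N \<le> \<rho> ^ r \<Longrightarrow> F M = F N" using F unfolding nice_def by blast
  have Fs: "\<And>M. F M \<noteq> 0 \<Longrightarrow> bnd 1 M" using F unfolding nice_def by simp
  have "psi F (int n) = (\<lambda>M. if bnd 1 M \<and> absv (det M) = \<rho> ^ n then R ^ n * F M else 0)"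
    unfolding psi_def using Fs by (auto simp: fun_eq_iff)
  hence "xs F (int n) = vol r * (\<Sum>t\<in>Ix n r. R ^ n * F (gt n t))"
    unfolding xs_def using dec[OF r, of "\<lambda>M. R ^ n * F M" n] Fc by simp
  thus ?thesis by (simp add: sum_distrib_left)
qed

lemma xs_scale_unit:
  assumes fn: "nice r s f" and r1: "r \<ge> 1"
  shows "\<exists>f' c. nice (r + s) 0 f' \<and> (\<forall>n. xs f n = c * xs f' (n + 2 * int s))"
proof -
  define x where "x = inverse pp ^ s"
  define g where "g = (mat x :: 'a mat2)"
  have ax: "absv x = inverse \<rho> ^ s" unfolding x_def by (simp add: av_power av_inverse)
  have gM: "(g ** M) $ i $ j = x * M $ i $ j" for M :: "'a mat2" and i j unfolding g_def using mat_mult_entry[of x M i j] by simp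
  have dg: "det g = x * x" unfolding g_def det_2 by simp
  have x0: "x \<noteq> 0" unfolding x_def by simp
  have gG: "g \<in> GL2" unfolding GL2_def using dg x0 by simp
  have adg: "absv (det g) = \<rho> powi (- (2 * int s))"
  proof -
    have "absv (det g) = inverse (\<rho> ^ (s + s))" using dg ax by (simp add: av_mult power_add power_inverse)
    also have "\<dots> = \<rho> powi (- (2 * int s))"
    proof -
      have "- (2 * int s) = - int (s + s)" by simp
      thus ?thesis by (simp only: power_int_minus power_int_of_nat)
    qed
    finally show ?thesis .
  qed
  define f' where "f' = (\<lambda>M. f (g ** M))"
  have "nice (r + s) 0 f'"
    unfolding nice_def
  proof (intro conjI allI impI)
    fix M N assume d: "mdist absv M N \<le> \<rho> ^ (r + s)"
    have "absv ((g ** M) $ i $ j - (g ** N) $ i $ j) \<le> \<rho> ^ r" for i j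
    proof -
      have "absv ((g ** M) $ i $ j - (g ** N) $ i $ j) = inverse \<rho> ^ s * absv (M $ i $ j - N $ i $ j)"
        unfolding gM by (simp add: right_diff_distrib[symmetric] av_mult ax)
      also have "\<dots> \<le> inverse \<rho> ^ s * \<rho> ^ (r + s)"
        using mdist_ge[of M i j N] d rho_pos by (intro mult_left_mono) auto
      also have "\<dots> = \<rho> ^ r" using rho_pos by (simp add: power_add power_inverse field_simps)
      finally show ?thesis .
    qed
    hence "mdist absv (g ** M) (g ** N) \<le> \<rho> ^ r" using mdist_le by blast
    thus "f' M = f' N" using fn unfolding nice_def f'_def by blast
  next
    fix M assume "f' M \<noteq> 0"
    hence b: "bnd (inverse \<rho> ^ s) (g ** M)" using fn unfolding nice_def f'_def by blast
    have "absv (M $ i $ j) \<le> 1" for i j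
    proof -
      have "inverse \<rho> ^ s * absv (M $ i $ j) \<le> inverse \<rho> ^ s * 1" using b unfolding bnd_def gM
        by (simp add: av_mult ax)
      thus ?thesis using rho_pos by (simp add: mult_le_cancel_left)
    qed
    thus "bnd (inverse \<rho> ^ 0) M" unfolding bnd_def by simp
  qed
  moreover have "\<forall>n. xs f n = complex_of_real (\<rho> powi (- (2 * int s))) * xs f' (n + 2 * int s)"
  proof
    fix n
    have "complex_of_real (\<rho> powi (- (2 * int s))) * xs f' (n + 2 * int s) = xs f (n + 2 * int s + - (2 * int s))"
      unfolding f'_def using xs_shift[OF fn gG adg] by blast
    thus "xs f n = complex_of_real (\<rho> powi (- (2 * int s))) * xs f' (n + 2 * int s)" by simp
  qed
  ultimately show ?thesis by blast
qed

lemma vol_nz_of_xs: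
  assumes fn: "nice r s f" and nz: "xs f n \<noteq> 0"
  shows "\<exists>r'\<ge>1. vol r' \<noteq> 0"
proof -
  define r1 where "r1 = max r 1"
  have fn1: "nice r1 s f" using nice_mono[OF fn] r1_def by simp
  obtain f' c where f': "nice (r1 + s) 0 f'" "\<forall>n. xs f n = c * xs f' (n + 2 * int s)"
    using xs_scale_unit[OF fn1] r1_def by auto
  have nz': "xs f' (n + 2 * int s) \<noteq> 0" using nz f'(2) by auto
  have "n + 2 * int s \<ge> 0"
  proof (rule ccontr)
    assume "\<not> n + 2 * int s \<ge> 0"
    hence "xs f' (n + 2 * int s) = 0" using xs_low[OF f'(1)] by simp
    thus False using nz' by simp
  qed
  then obtain k where k: "n + 2 * int s = int k" by (metis nonneg_eq_int)
  have "xs f' (int k) = vol (r1 + s) * (R ^ k * (\<Sum>t\<in>Ix k (r1 + s). f' (gt k t)))"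
    using xs_dec[OF _ f'(1)] r1_def by simp
  hence "vol (r1 + s) \<noteq> 0" using nz' k by auto
  moreover have "r1 + s \<ge> 1" unfolding r1_def by simp
  ultimately show ?thesis by blast
qed

lemma vol_nz: "\<exists>r\<ge>1. vol r \<noteq> 0"
proof -
  obtain f where f: "f \<in> Sch absv GL2" "dg f \<noteq> 0" using haar unfolding haar_def by blast
  obtain r s where ns: "nice r s f" using SchG_nice f by blast
  obtain c where c: "c > 0" "\<forall>M. f M \<noteq> 0 \<longrightarrow> absv (det M) \<ge> c" using SchG_det f by blast
  obtain k where k: "\<rho> ^ k < c" using rho_pow_small c by blast
  define L where "L = - 2 * int s"
  define U where "U = int k"
  define h where "h n = (\<lambda>M. if absv (det M) = \<rho> powi n then 1 * f M else 0)" for n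
  have pw: "f M = (\<Sum>n\<in>{L..U}. h n M)" for M
  proof (cases "f M = 0")
    case True
    hence "h n M = 0" for n unfolding h_def by simp
    thus ?thesis using True by simp
  next
    case False
    have "det M \<noteq> 0" using c False by force
    then obtain n0 where n0: "absv (det M) = \<rho> powi n0" using disc by blast
    have "bnd (inverse \<rho> ^ s) M" using ns False unfolding nice_def by blast
    hence "absv (det M) \<le> inverse \<rho> ^ s * inverse \<rho> ^ s" using bnd_det rho_pos by simp
    also have "\<dots> = \<rho> powi L"
    proof -
      have "L = - int (s + s)" unfolding L_def by simp
      hence "\<rho> powi L = inverse (\<rho> ^ (s + s))" by (simp only: power_int_minus power_int_of_nat)
      thus ?thesis by (simp add: power_add power_inverse)
    qed
    finally have "\<rho> powi n0 \<le> \<rho> powi L" using n0 by simp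
    hence "L \<le> n0" using rho_powi_strict by (meson not_le)
    moreover have "n0 \<le> U"
    proof (rule ccontr)
      assume "\<not> n0 \<le> U"
      hence "\<rho> powi n0 < \<rho> powi U" using rho_powi_strict by simp
      also have "\<dots> < c" using k unfolding U_def by simp
      finally show False using c False n0 by force
    qed
    ultimately have n0in: "n0 \<in> {L..U}" by simp
    have "h n M = (if n = n0 then f M else 0)" for n
      unfolding h_def using n0 rho_powi_inj by auto
    hence "(\<Sum>n\<in>{L..U}. h n M) = (\<Sum>n\<in>{L..U}. if n = n0 then f M else 0)" by simp
    also have "\<dots> = f M" using n0in by simp
    finally show ?thesis by simp
  qed
  have hg: "goodG (h n)" for n unfolding h_def by (rule psi_good[OF ns])
  have "f = (\<lambda>M. \<Sum>n\<in>{L..U}. h n M)" using pw by (rule ext)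
  hence "dg f = dg (\<lambda>M. \<Sum>n\<in>{L..U}. h n M)" by simp
  also have "\<dots> = (\<Sum>n\<in>{L..U}. dg (h n))" using hg by (intro dg_sum) auto
  finally obtain n where "dg (h n) \<noteq> 0" using f(2) by (metis sum.neutral)
  moreover have "psi f n = (\<lambda>M. complex_of_real (\<rho> powi n) * h n M)" unfolding psi_def h_def by auto
  hence "xs f n = complex_of_real (\<rho> powi n) * dg (h n)" unfolding xs_def using dg_scale goodG_Sch hg by simp
  ultimately have "xs f n \<noteq> 0" using rho_pos by simp
  thus ?thesis using vol_nz_of_xs[OF ns] by blast
qed

end

context haarl
begin

definition phi0 :: "'a mat2 \<Rightarrow> complex" where "phi0 M = (if bnd 1 M then 1 else 0)"

lemma phi0_nice: "nice r 0 phi0"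
  unfolding nice_def phi0_def
proof (intro conjI allI impI)
  fix M N assume d: "mdist absv M N \<le> \<rho> ^ r"
  hence d1: "mdist absv M N \<le> 1" "mdist absv N M \<le> 1" using rpow_le1[of r] mdist_sym[of M N] by linarith+
  have "bnd 1 M \<longleftrightarrow> bnd 1 N" using bnd_close d1 by blast
  thus "(if bnd 1 M then 1 else 0) = (if bnd 1 N then 1 else (0::complex))" by simp
next
  fix M assume "(if bnd 1 M then 1 else 0) \<noteq> (0::complex)"
  thus "bnd (inverse \<rho> ^ 0) M" by (simp split: if_splits)
qed

lemma Rep_nonempty: "r \<ge> 1 \<Longrightarrow> Rep r \<noteq> {}"
proof -
  assume r: "r \<ge> 1"
  have "mat 1 \<in> K0" unfolding K0_def using bnd_1_mat1 by (simp add: det_2)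
  thus ?thesis using Rep_ex[OF r] by blast
qed

lemma card_Ix: "card (Ix n r) = card (Rep r) * (\<Sum>a\<in>{..n}. qn ^ (n - a))"
proof -
  have "card (Ix n r) = (\<Sum>a\<in>{..n}. card (Rb (n - a) \<times> Rep r))"
    unfolding Ix_def using Rb_finite Rep_finite by (subst card_SigmaI) auto
  also have "\<dots> = (\<Sum>a\<in>{..n}. qn ^ (n - a) * card (Rep r))" by (simp add: card_cartesian_product Rb_card)
  finally show ?thesis by (simp add: sum_distrib_left mult.commute)
qed

lemma xs_phi0:
  assumes r: "r \<ge> 1" "vol r \<noteq> 0"
  shows "\<exists>A B. A \<noteq> 0 \<and> valid (xs phi0) 0 0 A B"
proof -
  define W where "W = vol r * of_nat (card (Rep r))"
  have W: "W \<noteq> 0" unfolding W_def using r Rep_nonempty[OF r(1)] Rep_finite[of r] by simp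
  have R1: "1 - R \<noteq> 0" using R_ne1 by simp
  have "xs phi0 (int k) = W / (1 - R) + (- (W * R / (1 - R))) * R ^ k" for k
  proof -
    have "xs phi0 (int k) = vol r * (R ^ k * (\<Sum>t\<in>Ix k r. phi0 (gt k t)))"
      using xs_dec[OF r(1) phi0_nice] by simp
    also have "(\<Sum>t\<in>Ix k r. phi0 (gt k t)) = of_nat (card (Ix k r))"
      using gt_props unfolding phi0_def by simp
    also have "R ^ k * of_nat (card (Ix k r)) = of_nat (card (Rep r)) * (\<Sum>a\<in>{..k}. R ^ a)"
    proof -
      have "R ^ k * of_nat (\<Sum>a\<in>{..k}. qn ^ (k - a)) = (\<Sum>a\<in>{..k}. R ^ k * of_nat (qn ^ (k - a)))"
        by (simp add: sum_distrib_left)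
      also have "\<dots> = (\<Sum>a\<in>{..k}. R ^ a)" using R_qn2[of _ 0 k] by (intro sum.cong) auto
      finally show ?thesis unfolding card_Ix by (simp add: algebra_simps)
    qed
    also have "(\<Sum>a\<in>{..k}. R ^ a) = (1 - R * R ^ k) / (1 - R)"
    proof -
      have "(\<Sum>a\<in>{..k}. R ^ a) = (\<Sum>a<Suc k. R ^ a)" by (simp add: lessThan_Suc_atMost)
      also have "\<dots> = (R ^ Suc k - 1) / (R - 1)" using geometric_sum[OF R_ne1] by blast
      also have "\<dots> = (- (1 - R * R ^ k)) / (- (1 - R))" by simp
      also have "\<dots> = (1 - R * R ^ k) / (1 - R)" by (rule minus_divide_divide)
      finally show ?thesis .
    qed
    also have "vol r * (of_nat (card (Rep r)) * ((1 - R * R ^ k) / (1 - R))) = W * ((1 - R * R ^ k) / (1 - R))"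
      unfolding W_def by (simp only: mult.assoc)
    also have "\<dots> = (W - W * R * R ^ k) / (1 - R)" by (simp add: right_diff_distrib mult.assoc)
    also have "\<dots> = W / (1 - R) - W * R * R ^ k / (1 - R)" by (rule diff_divide_distrib)
    also have "\<dots> = W / (1 - R) + (- (W * R / (1 - R))) * R ^ k" by simp
    finally show ?thesis .
  qed
  hence k: "xs phi0 (int k) = W / (1 - R) + (- (W * R / (1 - R))) * rp (int k)" for k
    unfolding rp_def by simp
  have "\<forall>n\<ge>0. xs phi0 n = W / (1 - R) + (- (W * R / (1 - R))) * rp n"
  proof (intro allI impI)
    fix n :: int assume "n \<ge> 0"
    then obtain k where "n = int k" using nonneg_eq_int by blast
    thus "xs phi0 n = W / (1 - R) + (- (W * R / (1 - R))) * rp n" using k by simp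
  qed
  moreover have "\<forall>n<0. xs phi0 n = 0" using xs_low[OF phi0_nice] by simp
  ultimately have "valid (xs phi0) 0 0 (W / (1 - R)) (- (W * R / (1 - R)))" unfolding valid_def by simp
  moreover have "W / (1 - R) \<noteq> 0" using W R1 by simp
  ultimately show ?thesis by blast
qed

end

context haarl
begin

lemma xs_valid: assumes "f \<in> Sch absv UNIV" shows "\<exists>L N A B. valid (xs f) L N A B"
proof -
  obtain r s where ns: "nice r s f" using SchU_nice assms by blast
  obtain N0 A B where ev: "\<forall>n\<ge>N0. xs f n = A + B * complex_of_real (\<rho> powi n)" using xs_eventual assms by blast
  have "valid (xs f) (- 2 * int s) (max N0 (- 2 * int s)) A B"
    unfolding valid_def rp_def using ev xs_low[OF ns] by auto
  thus ?thesis by blast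
qed

definition D1 :: "('a mat2 \<Rightarrow> complex) \<Rightarrow> complex" where "D1 f = reg (xs f)"

lemma SchU_translate: "f \<in> Sch absv UNIV \<Longrightarrow> g \<in> GL2 \<Longrightarrow> (\<lambda>M. f (g ** M)) \<in> Sch absv UNIV"
proof -
  assume f: "f \<in> Sch absv UNIV" and g: "g \<in> GL2"
  obtain r s where "nice r s f" using SchU_nice f by blast
  moreover have "det g \<noteq> 0" using g unfolding GL2_def by simp
  ultimately obtain r' s' where "nice r' s' (\<lambda>M. f (g ** M))" using nice_translate by blast
  thus ?thesis by (rule nice_SchU)
qed

lemma act_D1:
  assumes f: "f \<in> Sch absv UNIV" and g: "g \<in> GL2" and m: "absv (det g) = \<rho> powi m"
  shows "act absv g D1 f = D1 f + of_int m * Acoef (xs f)"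
    and "complex_of_real (\<rho> powi m) * Acoef (xs (\<lambda>M. f (g ** M))) = Acoef (xs f)"
proof -
  obtain r s where ns: "nice r s f" using SchU_nice f by blast
  have fg: "(\<lambda>M. f (g ** M)) \<in> Sch absv UNIV" using SchU_translate f g by blast
  obtain L N A B where v1: "valid (xs (\<lambda>M. f (g ** M))) L N A B" using xs_valid fg by blast
  obtain L' N' A' B' where v2: "valid (xs f) L' N' A' B'" using xs_valid f by blast
  define c where "c = complex_of_real (\<rho> powi m)"
  have eqf: "(\<lambda>n. c * xs (\<lambda>M. f (g ** M)) n) = (\<lambda>n. xs f (n + m))"
    unfolding c_def using xs_shift[OF ns g m] by simp
  have v3: "valid (\<lambda>n. xs f (n + m)) L N (c * A) (c * B)" using valid_scale[OF v1, of c] eqf by simp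
  have v4: "valid (\<lambda>n. xs f (n + m)) (L' - m) (N' - m) A' (B' * rp m)" using valid_shift[OF v2] by simp
  have cA: "c * A = A'" using Acoef_eq[OF v3] Acoef_eq[OF v4] by simp
  have "act absv g D1 f = c * reg (xs (\<lambda>M. f (g ** M)))" unfolding act_def D1_def c_def using m by simp
  also have "\<dots> = reg (\<lambda>n. c * xs (\<lambda>M. f (g ** M)) n)" using reg_scale[OF v1] by simp
  also have "\<dots> = reg (\<lambda>n. xs f (n + m))" using eqf by simp
  also have "\<dots> = reg (xs f) + of_int m * A'" using reg_shift[OF v2] by simp
  finally show "act absv g D1 f = D1 f + of_int m * Acoef (xs f)" unfolding D1_def using Acoef_eq[OF v2] by simp
  show "complex_of_real (\<rho> powi m) * Acoef (xs (\<lambda>M. f (g ** M))) = Acoef (xs f)"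
    using Acoef_eq[OF v1] Acoef_eq[OF v2] cA unfolding c_def by simp
qed

lemma GL2_m: "g \<in> GL2 \<Longrightarrow> \<exists>m. absv (det g) = \<rho> powi m"
  unfolding GL2_def using disc by simp

theorem main:
  "\<exists>D1. is_dist absv UNIV D1 \<and>
     (\<forall>f\<in>Sch absv GL2. D1 f = dg (\<lambda>M. complex_of_real (absv (det M)) * f M)) \<and>
     gen_invariant1 absv UNIV D1 \<and> \<not> invariant1 absv UNIV D1"
proof (intro exI[of _ D1] conjI)
  show "is_dist absv UNIV D1"
    unfolding is_dist_def
  proof (intro ballI allI conjI)
    fix f h and c :: complex assume f: "f \<in> Sch absv UNIV" and h: "h \<in> Sch absv UNIV"
    obtain L N A B where vf: "valid (xs f) L N A B" using xs_valid f by blast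
    obtain L' N' A' B' where vh: "valid (xs h) L' N' A' B'" using xs_valid h by blast
    have "xs (\<lambda>M. f M + h M) = (\<lambda>n. xs f n + xs h n)" using xs_add[OF f h] by (simp add: fun_eq_iff)
    thus "D1 (\<lambda>M. f M + h M) = D1 f + D1 h" unfolding D1_def using reg_add[OF vf vh] by simp
    have "xs (\<lambda>M. c * f M) = (\<lambda>n. c * xs f n)" using xs_scale[OF f] by (simp add: fun_eq_iff)
    thus "D1 (\<lambda>M. c * f M) = c * D1 f" unfolding D1_def using reg_scale[OF vf] by simp
  qed
next
  show "\<forall>f\<in>Sch absv GL2. D1 f = dg (\<lambda>M. complex_of_real (absv (det M)) * f M)"
  proof
    fix f assume f: "f \<in> Sch absv GL2"
    obtain L U where LU: "L \<le> U" "\<forall>n. n < L \<or> n > U \<longrightarrow> xs f n = 0"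
      "(\<Sum>n\<in>{L..U}. xs f n) = dg (\<lambda>M. complex_of_real (absv (det M)) * f M)"
      using xs_restrict[OF f] by blast
    have "reg (xs f) = (\<Sum>n\<in>{L..<U+1}. xs f n)" using LU by (intro reg_fin) auto
    also have "{L..<U+1} = {L..U}" by auto
    finally show "D1 f = dg (\<lambda>M. complex_of_real (absv (det M)) * f M)" unfolding D1_def using LU(3) by simp
  qed
next
  show "gen_invariant1 absv UNIV D1"
    unfolding gen_invariant1_def
  proof (intro exI[of _ 1] allI impI ballI)
    fix gs :: "'a mat2 list" and f assume len: "length gs = Suc 1" and sub: "set gs \<subseteq> GL2" and f: "f \<in> Sch absv UNIV"
    obtain g0 g1 where gs: "gs = [g0, g1]" using len by (auto simp: length_Suc_conv)
    have g0: "g0 \<in> GL2" and g1: "g1 \<in> GL2" using sub gs by auto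
    obtain m0 where m0: "absv (det g0) = \<rho> powi m0" using GL2_m g0 by blast
    obtain m1 where m1: "absv (det g1) = \<rho> powi m1" using GL2_m g1 by blast
    define E where "E = (\<lambda>f. act absv g1 D1 f - D1 f)"
    have E: "E h = of_int m1 * Acoef (xs h)" if "h \<in> Sch absv UNIV" for h
      unfolding E_def using act_D1(1)[OF that g1 m1] by simp
    have f0: "(\<lambda>M. f (g0 ** M)) \<in> Sch absv UNIV" using SchU_translate f g0 by blast
    have "iter_op absv gs D1 f = act absv g0 E f - E f" unfolding iter_op_def gs E_def by simp
    also have "act absv g0 E f = complex_of_real (\<rho> powi m0) * (of_int m1 * Acoef (xs (\<lambda>M. f (g0 ** M))))"
      unfolding act_def using E[OF f0] m0 by simp
    also have "\<dots> = of_int m1 * Acoef (xs f)" using act_D1(2)[OF f g0 m0] by (simp add: algebra_simps)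
    also have "E f = of_int m1 * Acoef (xs f)" using E[OF f] .
    finally show "iter_op absv gs D1 f = 0" by simp
  qed
next
  show "\<not> invariant1 absv UNIV D1"
  proof
    assume inv: "invariant1 absv UNIV D1"
    obtain r where r: "r \<ge> 1" "vol r \<noteq> 0" using vol_nz by blast
    obtain A B where AB: "A \<noteq> 0" "valid (xs phi0) 0 0 A B" using xs_phi0[OF r] by blast
    have p0: "phi0 \<in> Sch absv UNIV" using phi0_nice by (rule nice_SchU)
    define g :: "'a mat2" where "g = mat pp"
    have dg: "det g = pp * pp" unfolding g_def det_2 by simp
    have gG: "g \<in> GL2" unfolding GL2_def using dg by simp
    have m: "absv (det g) = \<rho> powi 2" using dg by (simp add: av_mult power2_eq_square)
    have "act absv g D1 phi0 = D1 phi0 + of_int 2 * Acoef (xs phi0)" using act_D1(1)[OF p0 gG m] .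
    moreover have "act absv g D1 phi0 = D1 phi0" using inv gG p0 unfolding invariant1_def by blast
    ultimately have "Acoef (xs phi0) = 0" by simp
    thus False using Acoef_eq[OF AB(2)] AB(1) by simp
  qed
qed

end

theorem lemma2p7:
  fixes absv :: "'a::field_char_0 \<Rightarrow> real"
    and dg :: "('a mat2 \<Rightarrow> complex) \<Rightarrow> complex"
  assumes "nonarch_local_field absv"
    and "haar absv dg"
  shows "\<exists>D1. is_dist absv UNIV D1 \<and>
     (\<forall>f\<in>Sch absv GL2. D1 f = dg (\<lambda>M. complex_of_real (absv (det M)) * f M)) \<and>
     gen_invariant1 absv UNIV D1 \<and> \<not> invariant1 absv UNIV D1"
proof -
  interpret haarl absv dg using assms unfolding haarl_def haarl_axioms_def nalf_def by blast
  show ?thesis by (rule main)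
qed

end
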